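(* Every maximal geodesic of $\Sigma$ is the image, under a horizontal translation $(x,y)\mapsto(x+c,y)$, possibly composed with the reflection $(x,y)\mapsto(-x,y)$, of one of the following curves, for some $a>0$: (i) the $y$-axis $\{x=0\}$; (ii) (geodesic with horizontal tangent at $(0,a)$) the curve $\{(x,y):0<y\le a,\ x=\pm\sqrt{\tfrac{3+\sinh^2a}{3}}\arccos\big(\tfrac{\cosh y}{\cosh a}\big)\}$ (both signs together), which satisfies $\frac{dx}{dy}=\pm\frac{\sqrt{3+\sinh^2 a}\,\sinh y}{\sqrt3\sqrt{\sinh^2a-\sinh^2y}}$; (iii) (slope $\sqrt3/\sinh a$ at $(0,a)$) the curve $x=\frac1{\sqrt3}(\cosh y-\cosh a)$, $y\in(0,\infty)$; (iv) (slope $m>\sqrt3/\sinh a$ at $(0,a)$) the curve $x=F(y)-F(a)$, $y\in(0,\infty)$, where $$F(y)=\frac{\sqrt{3+\sinh^2a}}{\sqrt{m^2\sinh^2a-3}}\log\Big\{(m^2\sinh^2a-3)\cosh y+\sqrt{m^2\sinh^2a-3}\,\sqrt{(m^2\sinh^2a-3)\cosh^2y+3\cosh^2a+2m^2\sinh^2a}\Big\}.$$ Moreover, a geodesic through $(0,a)$ with slope $m$, $0\le m<\sqrt3/\sinh a$, has a horizontal tangent at some point and is a horizontal translate of a geodesic of type (ii).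
   Context: $\Sigma=\mathbb{R}\times(0,\infty)$ with metric $ds^2=P(y)(dx^2+dy^2)$, $P(y)=\frac{e^{4y}+10e^{2y}+1}{4(e^{2y}-1)^2}$ (note $P(y)=\frac14+\frac{3}{4\sinh^2y}$). Geodesics are considered as unparametrized curves. *)

theory Defs
  imports "HOL-Analysis.Analysis"
begin

text \<open>Conformal factor of the metric ds^2 = P(y)(dx^2+dy^2) on Sigma = R x (0,inf).\<close>
definition P :: "real \<Rightarrow> real" where
  "P y = (exp (4*y) + 10 * exp (2*y) + 1) / (4 * (exp (2*y) - 1)^2)"

text \<open>With phi = (1/2) ln P the Christoffel symbols give
  x'' + (P'/P) x' y' = 0 and y'' + (P'/(2P)) (y'^2 - x'^2) = 0.\<close>
definition geodesic_on :: "real set \<Rightarrow> (real \<Rightarrow> real) \<Rightarrow> (real \<Rightarrow> real) \<Rightarrow> bool" where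
  "geodesic_on I x y \<longleftrightarrow> open I \<and> is_interval I \<and> I \<noteq> {} \<and>
     (\<forall>t\<in>I. y t > 0 \<and>
        x differentiable (at t) \<and> y differentiable (at t) \<and>
        (deriv x has_real_derivative
           (- (deriv P (y t) / P (y t)) * deriv x t * deriv y t)) (at t) \<and>
        (deriv y has_real_derivative
           ((deriv P (y t) / (2 * P (y t))) * ((deriv x t)^2 - (deriv y t)^2))) (at t) \<and>
        (deriv x t, deriv y t) \<noteq> (0, 0))"

definition maximal_geodesic :: "real set \<Rightarrow> (real \<Rightarrow> real) \<Rightarrow> (real \<Rightarrow> real) \<Rightarrow> bool" where
  "maximal_geodesic I x y \<longleftrightarrow> geodesic_on I x y \<and>
     (\<forall>J x2 y2. geodesic_on J x2 y2 \<and> I \<subseteq> J \<and> (\<forall>t\<in>I. x2 t = x t \<and> y2 t = y t) \<longrightarrow> J = I)"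

definition geo_trace :: "real set \<Rightarrow> (real \<Rightarrow> real) \<Rightarrow> (real \<Rightarrow> real) \<Rightarrow> (real \<times> real) set" where
  "geo_trace I x y = (\<lambda>t. (x t, y t)) ` I"

definition hmove :: "real \<Rightarrow> real \<Rightarrow> real \<times> real \<Rightarrow> real \<times> real" where
  "hmove e c = (\<lambda>(u, v). (e * u + c, v))"

definition curve_i :: "(real \<times> real) set" where
  "curve_i = {(u, v). u = 0 \<and> v > 0}"

definition curve_ii :: "real \<Rightarrow> (real \<times> real) set" where
  "curve_ii a = {(u, v). 0 < v \<and> v \<le> a \<and>
     (u = sqrt ((3 + (sinh a)^2) / 3) * arccos (cosh v / cosh a) \<or>
      u = - sqrt ((3 + (sinh a)^2) / 3) * arccos (cosh v / cosh a))}"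

definition curve_iii :: "real \<Rightarrow> (real \<times> real) set" where
  "curve_iii a = {(u, v). 0 < v \<and> u = (cosh v - cosh a) / sqrt 3}"

definition F4 :: "real \<Rightarrow> real \<Rightarrow> real \<Rightarrow> real" where
  "F4 a m y = sqrt (3 + (sinh a)^2) / sqrt (m^2 * (sinh a)^2 - 3) *
     ln ((m^2 * (sinh a)^2 - 3) * cosh y
         + sqrt (m^2 * (sinh a)^2 - 3) *
           sqrt ((m^2 * (sinh a)^2 - 3) * (cosh y)^2 + 3 * (cosh a)^2 + 2 * m^2 * (sinh a)^2))"

definition curve_iv :: "real \<Rightarrow> real \<Rightarrow> (real \<times> real) set" where
  "curve_iv a m = {(u, v). 0 < v \<and> u = F4 a m v - F4 a m a}"

end

theory Submission
  imports Defs
begin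


definition P2 :: "real \<Rightarrow> real" where "P2 v = 1/4 + 3/(4*(sinh v)^2)"
definition P1 :: "real \<Rightarrow> real" where "P1 v = -3 * cosh v / (2 * (sinh v)^3)"

lemma sinh_sq_exp: "(sinh (v::real))^2 = (exp v ^2 - 1)^2 / (4 * exp v ^2)"
  by (simp add: sinh_def field_simps exp_minus power2_eq_square)

lemma P_eq: assumes "v > 0" shows "P v = P2 v"
proof -
  define u where "u = exp v"
  have u1: "u > 1" using assms by (simp add: u_def)
  have e4: "exp (4 * v) = u^4" unfolding u_def by (metis exp_of_nat_mult of_nat_numeral)
  have e2: "exp (2 * v) = u^2" unfolding u_def by (metis exp_of_nat_mult of_nat_numeral)
  have ne: "u^2 - 1 \<noteq> 0" using u1
    by (metis less_numeral_extra(4) one_less_power pos2 right_minus_eq)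
  have "P2 v = 1/4 + 3 * u^2 / (u^2-1)^2"
    unfolding P2_def sinh_sq_exp u_def[symmetric] using ne u1 by (simp add: field_simps)
  also have "\<dots> = (u^4 + 10*u^2 + 1) / (4*(u^2-1)^2)" using ne by (simp add: field_simps) (simp add: algebra_simps power2_eq_square power4_eq_xxxx)
  also have "\<dots> = P v" unfolding P_def e4 e2 by simp
  finally show ?thesis by simp
qed

lemma P2_deriv: assumes "v > 0" shows "(P2 has_real_derivative P1 v) (at v)"
proof -
  have s: "sinh v \<noteq> 0" using assms by simp
  have "(P2 has_real_derivative (- (3 * (2 * sinh v * cosh v)) / (4 * (sinh v)^2)^2 * 4)) (at v)"
    unfolding P2_def[abs_def]
    by (rule derivative_eq_intros refl | use s in simp)+
  moreover have "- (3 * (2 * sinh v * cosh v)) / (4 * (sinh v)^2)^2 * 4 = P1 v"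
    unfolding P1_def using s by (simp add: field_simps power2_eq_square power3_eq_cube)
  ultimately show ?thesis by simp
qed

lemma P_deriv: assumes "v > 0" shows "(P has_real_derivative P1 v) (at v)"
  by (rule has_field_derivative_transform_within_open[OF P2_deriv[OF assms], of "{0<..}"])
     (use assms P_eq in auto)

lemma deriv_P: "v > 0 \<Longrightarrow> deriv P v = P1 v"
  using P_deriv DERIV_imp_deriv by blast

lemma P_gt: "v > 0 \<Longrightarrow> P v > 1/4"
  by (simp add: P_eq P2_def)

lemma P_pos: "v > 0 \<Longrightarrow> P v > 0"
  using P_gt[of v] by linarith


lemma geo_unpack:
  assumes "geodesic_on I x y" "t \<in> I"
  shows "y t > 0" "(x has_real_derivative deriv x t) (at t)" "(y has_real_derivative deriv y t) (at t)"
    "(deriv x has_real_derivative (- (P1 (y t) / P (y t)) * deriv x t * deriv y t)) (at t)"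
    "(deriv y has_real_derivative ((P1 (y t) / (2 * P (y t))) * ((deriv x t)^2 - (deriv y t)^2))) (at t)"
    "(deriv x t, deriv y t) \<noteq> (0, 0)"
  using assms unfolding geodesic_on_def
  by (auto simp: deriv_P DERIV_deriv_iff_real_differentiable)

lemma geo_interval: assumes "geodesic_on I x y" shows "open I" "is_interval I" "I \<noteq> {}" "convex I" "connected I"
  using assms unfolding geodesic_on_def by (auto simp: is_interval_convex_1 is_interval_connected_1 convex_connected)

lemma conservation:
  assumes g: "geodesic_on I x y"
  obtains C E where "\<forall>t\<in>I. P (y t) * deriv x t = C" "\<forall>t\<in>I. P (y t) * ((deriv x t)^2 + (deriv y t)^2) = E"
proof -
  note u = geo_unpack[OF g]
  have d1: "((\<lambda>t. P (y t) * deriv x t) has_real_derivative 0) (at t within I)" if "t \<in> I" for t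
  proof -
    have "((\<lambda>t. P (y t) * deriv x t) has_real_derivative
      (P1 (y t) * deriv y t) * deriv x t + P (y t) * (- (P1 (y t) / P (y t)) * deriv x t * deriv y t)) (at t)"
      using DERIV_mult[OF DERIV_chain2[OF P_deriv[OF u(1)[OF that]] u(3)[OF that]] u(4)[OF that]]
      by (simp add: algebra_simps)
    moreover have "(P1 (y t) * deriv y t) * deriv x t + P (y t) * (- (P1 (y t) / P (y t)) * deriv x t * deriv y t) = 0"
      using P_pos[OF u(1)[OF that]] by (simp add: field_simps)
    ultimately show ?thesis by (metis has_field_derivative_at_within)
  qed
  have d2: "((\<lambda>t. P (y t) * ((deriv x t)^2 + (deriv y t)^2)) has_real_derivative 0) (at t within I)" if "t \<in> I" for t
  proof -
    let ?x1 = "deriv x t" and ?y1 = "deriv y t" and ?p = "P (y t)" and ?q = "P1 (y t)"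
    have "((\<lambda>t. P (y t) * ((deriv x t)^2 + (deriv y t)^2)) has_real_derivative
      (?q * ?y1) * (?x1^2 + ?y1^2) + ?p * (2 * ?x1 * (- (?q / ?p) * ?x1 * ?y1) + 2 * ?y1 * ((?q / (2 * ?p)) * (?x1^2 - ?y1^2)))) (at t)"
      by (rule derivative_eq_intros DERIV_chain2[OF P_deriv] u that refl | simp add: algebra_simps)+
    moreover have "(?q * ?y1) * (?x1^2 + ?y1^2) + ?p * (2 * ?x1 * (- (?q / ?p) * ?x1 * ?y1) + 2 * ?y1 * ((?q / (2 * ?p)) * (?x1^2 - ?y1^2))) = 0"
      using P_pos[OF u(1)[OF that]] by (simp add: field_simps power2_eq_square)
    ultimately show ?thesis by (metis has_field_derivative_at_within)
  qed
  obtain C where "\<forall>t\<in>I. P (y t) * deriv x t = C"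
    using has_field_derivative_zero_constant[OF geo_interval(4)[OF g] d1] by blast
  moreover obtain E where "\<forall>t\<in>I. P (y t) * ((deriv x t)^2 + (deriv y t)^2) = E"
    using has_field_derivative_zero_constant[OF geo_interval(4)[OF g] d2] by blast
  ultimately show ?thesis using that by blast
qed

lemma cons_facts:
  assumes g: "geodesic_on I x y" and C: "\<forall>t\<in>I. P (y t) * deriv x t = C"
    and E: "\<forall>t\<in>I. P (y t) * ((deriv x t)^2 + (deriv y t)^2) = E" and t: "t \<in> I"
  shows "E > 0" "deriv x t = C / P (y t)" "(P (y t) * deriv y t)^2 = E * P (y t) - C^2"
proof -
  note u = geo_unpack[OF g t]
  have p: "P (y t) > 0" using P_pos u(1) by blast
  have "(deriv x t)^2 + (deriv y t)^2 > 0" using u(6) by (simp add: sum_power2_gt_zero_iff)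
  then show "E > 0" using E t p by force
  show "deriv x t = C / P (y t)" using C t p by (auto simp: field_simps)
  have "P (y t) * (P (y t) * ((deriv x t)^2 + (deriv y t)^2)) = E * P (y t)" using E t by simp
  moreover have "(P (y t) * deriv x t)^2 = C^2" using C t by simp
  ultimately show "(P (y t) * deriv y t)^2 = E * P (y t) - C^2"
    by (simp add: algebra_simps power2_eq_square)
qed


lemma open_interval_around:
  fixes D :: "real set"
  assumes "open D" "v \<in> D"
  obtains a b where "a \<in> D" "b \<in> D" "a < v" "v < b"
proof -
  obtain e where e: "e > 0" "ball v e \<subseteq> D" using assms openE by blast
  have "v - e/2 \<in> ball v e" "v + e/2 \<in> ball v e" using e by (auto simp: dist_real_def)
  then have "v - e/2 \<in> D" "v + e/2 \<in> D" using e by blast+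
  then show ?thesis using that e by auto
qed
lemma interval_sub:
  fixes D :: "real set"
  assumes "is_interval D" "a \<in> D" "b \<in> D"
  shows "{a..b} \<subseteq> D"
proof
  fix z assume "z \<in> {a..b}"
  then have "a \<le> z" "z \<le> b" by auto
  then show "z \<in> D" using assms(1)[unfolded is_interval_1] assms(2,3) by blast
qed

lemma antideriv:
  fixes f :: "real \<Rightarrow> real"
  assumes D: "open D" "is_interval D" and f: "continuous_on D f" and c: "c \<in> D"
  obtains T where "\<forall>v\<in>D. (T has_real_derivative f v) (at v)"
proof -
  define T where "T u = interval_lebesgue_integral lborel (ereal c) (ereal u) f" for u
  have "(T has_real_derivative f v) (at v)" if v: "v \<in> D" for v
  proof -
    obtain a1 b1 where 1: "a1 \<in> D" "b1 \<in> D" "a1 < v" "v < b1" using open_interval_around[OF D(1) v] by blast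
    obtain a2 b2 where 2: "a2 \<in> D" "b2 \<in> D" "a2 < c" "c < b2" using open_interval_around[OF D(1) c] by blast
    define a where "a = min a1 a2" define b where "b = max b1 b2"
    have ab: "a \<in> D" "b \<in> D" unfolding a_def b_def using 1 2 by (simp_all add: min_def max_def)
    have sub: "{a..b} \<subseteq> D" using interval_sub[OF D(2) ab] .
    have le: "a \<le> c" "c \<le> b" "a \<le> v" "v \<le> b" "a < v" "v < b" using 1 2 unfolding a_def b_def by linarith+
    have "(T has_vector_derivative f v) (at v within {a..b})"
      unfolding T_def
      using interval_integral_FTC2[OF le(1,2) continuous_on_subset[OF f sub] le(3,4)] by simp
    moreover have "at v within {a..b} = at v"
      by (rule at_within_interior) (use le in simp)
    ultimately show ?thesis by (simp add: has_real_derivative_iff_has_vector_derivative)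
  qed
  then show ?thesis using that by blast
qed


lemma inverse_fun:
  fixes T :: "real \<Rightarrow> real"
  assumes D: "open D" "is_interval D" and d: "\<And>v. v \<in> D \<Longrightarrow> (T has_real_derivative \<tau> v) (at v) \<and> \<tau> v > 0"
  defines "g \<equiv> inv_into D T"
  shows "open (T`D)" "is_interval (T`D)" "\<forall>v\<in>D. g (T v) = v" "\<forall>t\<in>T`D. g t \<in> D \<and> T (g t) = t"
    "\<forall>t\<in>T`D. (g has_real_derivative inverse (\<tau> (g t))) (at t)"
proof -
  have mono: "T v < T w" if "v \<in> D" "w \<in> D" "v < w" for v w
  proof (rule DERIV_pos_imp_increasing[OF that(3)])
    fix z assume "v \<le> z" "z \<le> w"
    then have "z \<in> D" using interval_sub[OF D(2) that(1,2)] by auto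
    then show "\<exists>y. (T has_real_derivative y) (at z) \<and> 0 < y" using d by blast
  qed
  have inj: "inj_on T D"
  proof (rule inj_onI)
    fix v w assume "v \<in> D" "w \<in> D" "T v = T w"
    then show "v = w" using mono[of v w] mono[of w v] by (cases "v < w"; cases "w < v") auto
  qed
  show gT: "\<forall>v\<in>D. g (T v) = v" unfolding g_def using inj by auto
  show Tg: "\<forall>t\<in>T`D. g t \<in> D \<and> T (g t) = t" unfolding g_def by (auto simp: inv_into_into f_inv_into_f)
  have cont: "isCont T v" if "v \<in> D" for v using d[OF that] DERIV_isCont by blast
  have contD: "continuous_on D T" using cont continuous_at_imp_continuous_on by blast
  have Ioo: "{T a<..<T b} \<subseteq> T`D" if "a \<in> D" "b \<in> D" "a < b" for a b
  proof -
    have sub: "{a..b} \<subseteq> D" using interval_sub[OF D(2) that(1,2)] .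
    have "connected (T ` {a..b})"
      by (rule connected_continuous_image[OF continuous_on_subset[OF contD sub]]) simp
    moreover have "T a \<in> T ` {a..b}" "T b \<in> T ` {a..b}" using that by auto
    ultimately have "{T a<..<T b} \<subseteq> T ` {a..b}" by (rule connected_contains_Ioo)
    then show ?thesis using sub by blast
  qed
  show "open (T`D)"
  proof (subst open_subopen, intro ballI)
    fix t assume "t \<in> T`D"
    then obtain v where v: "v \<in> D" "t = T v" by blast
    obtain a b where ab: "a \<in> D" "b \<in> D" "a < v" "v < b" using open_interval_around[OF D(1) v(1)] by blast
    have "T a < T v" "T v < T b" using mono[OF ab(1) v(1) ab(3)] mono[OF v(1) ab(2) ab(4)] by auto
    then have "t \<in> {T a<..<T b}" using v(2) by simp
    moreover have "{T a<..<T b} \<subseteq> T`D" using Ioo[OF ab(1,2)] ab(3,4) by linarith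
    moreover have "open {T a<..<T b}" by simp
    ultimately show "\<exists>S. open S \<and> t \<in> S \<and> S \<subseteq> T`D" by blast
  qed
  show "is_interval (T`D)"
    using D(2) contD connected_continuous_image is_interval_connected_1 by blast
  show "\<forall>t\<in>T`D. (g has_real_derivative inverse (\<tau> (g t))) (at t)"
  proof
    fix t assume t: "t \<in> T`D"
    then obtain v where v: "v \<in> D" "t = T v" by blast
    have gt: "g t = v" using gT v by simp
    obtain a b where ab: "a \<in> D" "b \<in> D" "a < v" "v < b" using open_interval_around[OF D(1) v(1)] by blast
    have sub: "{a..b} \<subseteq> D" using interval_sub[OF D(2) ab(1,2)] .
    have ic: "isCont g t" unfolding v(2)
    proof (rule isCont_inverse_function2[OF ab(3,4)])
      fix z assume "a \<le> z" "z \<le> b"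
      then have "z \<in> D" using sub by auto
      then show "g (T z) = z" "isCont T z" using gT cont by auto
    qed
    have dd: "(T has_real_derivative \<tau> v) (at v)" "\<tau> v > 0" using d[OF v(1)] by auto
    show "(g has_real_derivative inverse (\<tau> (g t))) (at t)"
    proof (rule DERIV_inverse_function[where a="T a" and b="T b"])
      show "(T has_real_derivative \<tau> (g t)) (at (g t))" using dd gt by simp
      show "\<tau> (g t) \<noteq> 0" using dd gt by simp
      show "T a < t" "t < T b" using mono[OF ab(1) v(1) ab(3)] mono[OF v(1) ab(2) ab(4)] v(2) by auto
      show "T (g y) = y" if "T a < y" "y < T b" for y
      proof -
        have "a < b" using ab by linarith
        then have "y \<in> T`D" using Ioo[OF ab(1,2)] that by auto
        then show ?thesis using Tg by blast
      qed
      show "isCont g t" by fact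
    qed
  qed
qed


lemma geodesic_intro:
  assumes J: "open J" "is_interval J" "J \<noteq> {}"
    and h: "\<And>t. t \<in> J \<Longrightarrow> y t > 0 \<and> (x has_real_derivative X1 t) (at t) \<and> (y has_real_derivative Y1 t) (at t) \<and>
      (X1 has_real_derivative (- (P1 (y t) / P (y t)) * X1 t * Y1 t)) (at t) \<and>
      (Y1 has_real_derivative (P1 (y t) / (2 * P (y t)) * ((X1 t)^2 - (Y1 t)^2))) (at t) \<and>
      (X1 t, Y1 t) \<noteq> (0, 0)"
  shows "geodesic_on J x y"
proof -
  have dx: "deriv x t = X1 t" and dy: "deriv y t = Y1 t" if "t \<in> J" for t
    using h[OF that] DERIV_imp_deriv by blast+
  show ?thesis unfolding geodesic_on_def
  proof (intro conjI ballI J)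
    fix t assume t: "t \<in> J"
    note ht = h[OF t]
    show "y t > 0" using ht by blast
    show "x differentiable at t" "y differentiable at t" using ht real_differentiable_def by blast+
    show "(deriv x has_real_derivative - (deriv P (y t) / P (y t)) * deriv x t * deriv y t) (at t)"
      using has_field_derivative_transform_within_open[of X1 _ t J "deriv x"] ht dx dy t J(1) deriv_P by auto
    show "(deriv y has_real_derivative deriv P (y t) / (2 * P (y t)) * ((deriv x t)\<^sup>2 - (deriv y t)\<^sup>2)) (at t)"
      using has_field_derivative_transform_within_open[of Y1 _ t J "deriv y"] ht dx dy t J(1) deriv_P by auto
    show "(deriv x t, deriv y t) \<noteq> (0, 0)" using ht dx dy t by auto
  qed
qed


lemma affine_J:
  fixes J0 :: "real set"
  assumes "open J0" "is_interval J0" "\<sigma> \<in> {1, -1}"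
  shows "open {t. \<sigma> * t - d \<in> J0}" "is_interval {t. \<sigma> * t - d \<in> J0}"
proof -
  have "{t. \<sigma> * t - d \<in> J0} = (\<lambda>t. \<sigma> * t - d) -` J0" by auto
  moreover have "open ((\<lambda>t. \<sigma> * t - d) -` J0)"
    by (rule open_vimage[OF assms(1)]) (intro continuous_intros)
  ultimately show "open {t. \<sigma> * t - d \<in> J0}" by simp
  show "is_interval {t. \<sigma> * t - d \<in> J0}"
    unfolding is_interval_1
  proof (intro ballI allI impI)
    fix a b z assume a: "a \<in> {t. \<sigma> * t - d \<in> J0}" and b: "b \<in> {t. \<sigma> * t - d \<in> J0}" and z: "a \<le> z \<and> z \<le> b"
    have A: "\<sigma> * a - d \<in> J0" and B: "\<sigma> * b - d \<in> J0" using a b by auto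
    have J: "\<And>p q w. p \<in> J0 \<Longrightarrow> q \<in> J0 \<Longrightarrow> p \<le> w \<Longrightarrow> w \<le> q \<Longrightarrow> w \<in> J0"
      using assms(2)[unfolded is_interval_1] by blast
    show "z \<in> {t. \<sigma> * t - d \<in> J0}"
    proof (cases "\<sigma> = 1")
      case True
      then have "\<sigma> * a - d \<le> \<sigma> * z - d" "\<sigma> * z - d \<le> \<sigma> * b - d" using z by auto
      then show ?thesis using J[OF A B] by simp
    next
      case False
      then have s: "\<sigma> = -1" using assms(3) by auto
      then have "\<sigma> * b - d \<le> \<sigma> * z - d" "\<sigma> * z - d \<le> \<sigma> * a - d" using z by auto
      then show ?thesis using J[OF B A] by simp
    qed
  qed
qed

lemma const_sign:
  fixes f :: "real \<Rightarrow> real"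
  assumes "connected I" "continuous_on I f" "\<forall>t\<in>I. f t \<noteq> 0" "t0 \<in> I"
  shows "\<exists>\<sigma>\<in>{1, -1::real}. \<forall>t\<in>I. \<sigma> * f t > 0"
proof -
  have iv: "is_interval (f ` I)"
    using assms(1,2) connected_continuous_image is_interval_connected_1 by blast
  have J: "\<And>p q w. p \<in> f`I \<Longrightarrow> q \<in> f`I \<Longrightarrow> p \<le> w \<Longrightarrow> w \<le> q \<Longrightarrow> w \<in> f`I"
    using iv[unfolded is_interval_1] by blast
  have z: "0 \<notin> f ` I" using assms(3) by auto
  show ?thesis
  proof (cases "f t0 > 0")
    case True
    have "f t > 0" if "t \<in> I" for t
    proof (rule ccontr)
      assume "\<not> f t > 0"
      then have "f t \<le> 0" "0 \<le> f t0" using True by auto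
      then have "0 \<in> f ` I" using J[of "f t" "f t0" 0] that assms(4) by blast
      then show False using z by blast
    qed
    then show ?thesis by (intro bexI[of _ 1]) auto
  next
    case False
    then have F: "f t0 < 0" using assms(3,4) by (meson linorder_neqE_linordered_idom)
    have "f t < 0" if "t \<in> I" for t
    proof (rule ccontr)
      assume "\<not> f t < 0"
      then have "f t0 \<le> 0" "0 \<le> f t" using F by auto
      then have "0 \<in> f ` I" using J[of "f t0" "f t" 0] that assms(4) by blast
      then show False using z by blast
    qed
    then show ?thesis by (intro bexI[of _ "-1"]) auto
  qed
qed

lemma zero_deriv_const:
  assumes "convex I" "\<And>t. t \<in> I \<Longrightarrow> (h has_real_derivative 0) (at t)"
  shows "\<exists>c. \<forall>t\<in>I. h t = (c::real)"
  using has_field_derivative_zero_constant[OF assms(1)] assms(2) has_field_derivative_at_within by blast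

lemma max_ext:
  assumes mg: "maximal_geodesic I x y" and g: "geodesic_on J x2 y2" and sub: "I \<subseteq> J"
    and ag: "\<forall>t\<in>I. x2 t = x t \<and> y2 t = y t"
  shows "J = I" "geo_trace I x y = geo_trace J x2 y2"
proof -
  show JI: "J = I" using mg g sub ag unfolding maximal_geodesic_def by blast
  show "geo_trace I x y = geo_trace J x2 y2" unfolding geo_trace_def JI
  proof (rule image_cong[OF refl])
    fix t assume "t \<in> I" then show "(x t, y t) = (x2 t, y2 t)" using ag by simp
  qed
qed

lemma deriv_cont:
  assumes g: "geodesic_on I x y" shows "continuous_on I (deriv y)" "continuous_on I (deriv x)"
    "continuous_on I y" "continuous_on I x"
proof -
  have "isCont (deriv y) t" "isCont (deriv x) t" "isCont y t" "isCont x t" if "t \<in> I" for t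
    using geo_unpack[OF g that] by (meson DERIV_isCont)+
  then show "continuous_on I (deriv y)" "continuous_on I (deriv x)"
    "continuous_on I y" "continuous_on I x" by (simp_all add: continuous_at_imp_continuous_on)
qed


lemma P_isCont: "v > 0 \<Longrightarrow> isCont P v"
  using P_deriv DERIV_isCont by blast

lemma P_cont_on: "continuous_on {0<..} P"
  using P_isCont continuous_at_imp_continuous_on by (metis greaterThan_iff)

lemma mono_case:
  assumes mg: "maximal_geodesic I x y"
    and C: "\<forall>t\<in>I. P (y t) * deriv x t = C"
    and E: "\<forall>t\<in>I. P (y t) * ((deriv x t)^2 + (deriv y t)^2) = E"
    and pos: "\<And>v. v > 0 \<Longrightarrow> E * P v - C^2 > 0"
    and G: "\<And>v. v > 0 \<Longrightarrow> (G has_real_derivative C / sqrt (E * P v - C^2)) (at v)"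
  shows "\<exists>e c. e \<in> {1,-1} \<and> geo_trace I x y = (\<lambda>v. (e * G v + c, v)) ` {0<..}"
proof -
  have g: "geodesic_on I x y" using mg maximal_geodesic_def by blast
  note u = geo_unpack[OF g]
  note cf = cons_facts[OF g C E]
  define R where "R v = sqrt (E * P v - C^2)" for v
  have Rpos: "R v > 0" if "v > 0" for v using pos[OF that] unfolding R_def by simp
  have Rsq: "(R v)^2 = E * P v - C^2" if "v > 0" for v using pos[OF that] unfolding R_def by simp
  obtain t0 where t0: "t0 \<in> I" using geo_interval(3)[OF g] by blast
  have yne: "deriv y t \<noteq> 0" if "t \<in> I" for t
  proof
    assume "deriv y t = 0"
    then have "E * P (y t) - C^2 = 0" using cf(3)[OF that] by simp
    then show False using pos[OF u(1)[OF that]] by simp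
  qed
  obtain \<sigma> where \<sigma>: "\<sigma> \<in> {1,-1::real}" "\<forall>t\<in>I. \<sigma> * deriv y t > 0"
    using const_sign[OF geo_interval(5)[OF g] deriv_cont(1)[OF g] _ t0] yne by blast
  have s2: "\<sigma> * \<sigma> = 1" using \<sigma>(1) by auto
  have dy: "deriv y t = \<sigma> * R (y t) / P (y t)" if t: "t \<in> I" for t
  proof -
    have y0: "y t > 0" using u(1)[OF t] .
    have p: "P (y t) > 0" using P_pos[OF y0] .
    have a: "\<sigma> * (P (y t) * deriv y t) > 0"
      using \<sigma>(2) t p by (metis mult.left_commute mult_pos_pos)
    have "(\<sigma> * (P (y t) * deriv y t))^2 = (P (y t) * deriv y t)^2"
      using s2 by (simp add: power2_eq_square algebra_simps)
    also have "\<dots> = (R (y t))^2" using cf(3)[OF t] Rsq[OF y0] by simp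
    finally have "\<sigma> * (P (y t) * deriv y t) = R (y t)"
      using a Rpos[OF y0] by (simp add: power2_eq_iff_nonneg)
    then have "\<sigma> * (\<sigma> * (P (y t) * deriv y t)) = \<sigma> * R (y t)" by simp
    then have "P (y t) * deriv y t = \<sigma> * R (y t)" using s2 by (simp add: mult.assoc[symmetric])
    then show ?thesis using p by (simp add: field_simps)
  qed
  define Gs where "Gs v = \<sigma> * G v" for v
  have Gs: "(Gs has_real_derivative \<sigma> * C / R v) (at v)" if "v > 0" for v
    using DERIV_cmult[OF G[OF that], of \<sigma>] unfolding Gs_def R_def by simp
  have "\<exists>c. \<forall>t\<in>I. x t - Gs (y t) = c"
  proof (rule zero_deriv_const[OF geo_interval(4)[OF g]])
    fix t assume t: "t \<in> I"
    have y0: "y t > 0" using u(1)[OF t] .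
    have "((\<lambda>t. x t - Gs (y t)) has_real_derivative deriv x t - \<sigma> * C / R (y t) * deriv y t) (at t)"
      by (intro DERIV_diff u(2)[OF t] DERIV_chain2[OF Gs[OF y0] u(3)[OF t]])
    moreover have "deriv x t - \<sigma> * C / R (y t) * deriv y t = 0"
    proof -
      have "\<sigma> * C / R (y t) * deriv y t = \<sigma> * \<sigma> * C / P (y t)"
        using dy[OF t] Rpos[OF y0] by (simp add: field_simps)
      then show ?thesis using cf(2)[OF t] s2 by simp
    qed
    ultimately show "((\<lambda>t. x t - Gs (y t)) has_real_derivative 0) (at t)" by simp
  qed
  then obtain c where c: "\<forall>t\<in>I. x t - Gs (y t) = c" by blast
  define \<tau> where "\<tau> v = P v / R v" for v
  have \<tau>pos: "\<tau> v > 0" if "v > 0" for v unfolding \<tau>_def using P_pos[OF that] Rpos[OF that] by simp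
  have contR: "continuous_on {0<..} R"
    unfolding R_def by (intro continuous_intros P_cont_on)
  have cont\<tau>: "continuous_on {0<..} \<tau>"
    unfolding \<tau>_def[abs_def] by (rule continuous_on_divide[OF P_cont_on contR]) (use Rpos in force)
  obtain T where T: "\<forall>v\<in>{0<..}. (T has_real_derivative \<tau> v) (at v)"
    using antideriv[of "{0<..}" \<tau> 1] cont\<tau> by auto
  have "\<exists>d. \<forall>t\<in>I. \<sigma> * t - T (y t) = d"
  proof (rule zero_deriv_const[OF geo_interval(4)[OF g]])
    fix t assume t: "t \<in> I"
    have y0: "y t > 0" using u(1)[OF t] .
    have Td: "(T has_real_derivative \<tau> (y t)) (at (y t))" using T y0 by simp
    have "((\<lambda>t. \<sigma> * t - T (y t)) has_real_derivative \<sigma> * 1 - \<tau> (y t) * deriv y t) (at t)"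
      by (intro DERIV_diff DERIV_cmult DERIV_ident DERIV_chain2[OF Td u(3)[OF t]])
    moreover have "\<sigma> * 1 - \<tau> (y t) * deriv y t = 0"
      using dy[OF t] Rpos[OF y0] P_pos[OF y0] s2 unfolding \<tau>_def by (simp add: field_simps)
    ultimately show "((\<lambda>t. \<sigma> * t - T (y t)) has_real_derivative 0) (at t)" by simp
  qed
  then obtain d where d: "\<forall>t\<in>I. \<sigma> * t - T (y t) = d" by blast
  define D where "D = ({0<..} :: real set)"
  have D: "open D" "is_interval D" unfolding D_def by (auto simp: is_interval_1)
  have dD: "\<And>v. v \<in> D \<Longrightarrow> (T has_real_derivative \<tau> v) (at v) \<and> \<tau> v > 0"
    using T \<tau>pos unfolding D_def by auto
  note inv = inverse_fun[OF D dD]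
  define g where "g = inv_into D T"
  define J where "J = {t. \<sigma> * t - d \<in> T ` D}"
  define y2 where "y2 t = g (\<sigma> * t - d)" for t
  define x2 where "x2 t = Gs (y2 t) + c" for t
  have IJ: "I \<subseteq> J"
  proof
    fix t assume t: "t \<in> I"
    have "\<sigma> * t - d = T (y t)" using d t by force
    moreover have "y t \<in> D" using u(1)[OF t] unfolding D_def by simp
    ultimately show "t \<in> J" unfolding J_def by simp
  qed
  have ag: "\<forall>t\<in>I. x2 t = x t \<and> y2 t = y t"
  proof
    fix t assume t: "t \<in> I"
    have "\<sigma> * t - d = T (y t)" using d t by force
    moreover have "y t \<in> D" using u(1)[OF t] unfolding D_def by simp
    ultimately have "y2 t = y t" unfolding y2_def g_def using inv(3) by simp
    then show "x2 t = x t \<and> y2 t = y t" unfolding x2_def using c t by force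
  qed
  have Jne: "J \<noteq> {}" using IJ t0 by blast
  have J: "open J" "is_interval J" "J \<noteq> {}"
    using affine_J[OF inv(1,2) \<sigma>(1), of d] Jne unfolding J_def by auto
  have hyp: "y2 t > 0 \<and> (x2 has_real_derivative C / P (y2 t)) (at t) \<and> (y2 has_real_derivative \<sigma> * R (y2 t) / P (y2 t)) (at t) \<and>
      ((\<lambda>t. C / P (y2 t)) has_real_derivative - (P1 (y2 t) / P (y2 t)) * (C / P (y2 t)) * (\<sigma> * R (y2 t) / P (y2 t))) (at t) \<and>
      ((\<lambda>t. \<sigma> * R (y2 t) / P (y2 t)) has_real_derivative P1 (y2 t) / (2 * P (y2 t)) * ((C / P (y2 t))^2 - (\<sigma> * R (y2 t) / P (y2 t))^2)) (at t) \<and>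
      (C / P (y2 t), \<sigma> * R (y2 t) / P (y2 t)) \<noteq> (0, 0)" if t: "t \<in> J" for t
  proof -
    define s where "s = \<sigma> * t - d"
    have sJ: "s \<in> T ` D" using t unfolding J_def s_def by simp
    define v where "v = y2 t"
    have v: "v = g s" unfolding v_def y2_def s_def by simp
    have vD: "v \<in> D" using bspec[OF inv(4) sJ] v unfolding g_def by simp
    have v0: "v > 0" using vD unfolding D_def by simp
    have p: "P v > 0" using P_pos[OF v0] .
    have r: "R v > 0" using Rpos[OF v0] .
    have gd: "(g has_real_derivative inverse (\<tau> v)) (at s)" using bspec[OF inv(5) sJ] v unfolding g_def by simp
    have lin: "((\<lambda>t. \<sigma> * t - d) has_real_derivative \<sigma>) (at t)"
      using DERIV_diff[OF DERIV_cmult[OF DERIV_ident, of \<sigma>] DERIV_const[of d]] by simp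
    have "(y2 has_real_derivative inverse (\<tau> v) * \<sigma>) (at t)"
      unfolding y2_def[abs_def] using DERIV_chain2[OF gd[unfolded s_def] lin] by simp
    moreover have "inverse (\<tau> v) * \<sigma> = \<sigma> * R v / P v" unfolding \<tau>_def using p r by (simp add: field_simps)
    ultimately have y2d: "(y2 has_real_derivative \<sigma> * R (y2 t) / P (y2 t)) (at t)" unfolding v_def by simp
    have "(x2 has_real_derivative \<sigma> * C / R v * (\<sigma> * R v / P v) + 0) (at t)"
      unfolding x2_def[abs_def] v_def using DERIV_add[OF DERIV_chain2[OF Gs[OF v0, unfolded v_def] y2d] DERIV_const[of c]] by simp
    moreover have "\<sigma> * C / R v * (\<sigma> * R v / P v) + 0 = C / P v" using s2 r p by (simp add: field_simps)
    ultimately have x2d: "(x2 has_real_derivative C / P (y2 t)) (at t)" using v_def by metis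
    have Pd: "((\<lambda>t. P (y2 t)) has_real_derivative P1 v * (\<sigma> * R v / P v)) (at t)"
      unfolding v_def using DERIV_chain2[OF P_deriv[OF v0, unfolded v_def] y2d] by simp
    have "((\<lambda>t. C / P (y2 t)) has_real_derivative (0 * P v - C * (P1 v * (\<sigma> * R v / P v))) / (P v * P v)) (at t)"
      using DERIV_divide[OF DERIV_const Pd] p unfolding v_def by simp
    moreover have "(0 * P v - C * (P1 v * (\<sigma> * R v / P v))) / (P v * P v)
       = - (P1 v / P v) * (C / P v) * (\<sigma> * R v / P v)" using p by (simp add: field_simps)
    ultimately have X1d: "((\<lambda>t. C / P (y2 t)) has_real_derivative - (P1 (y2 t) / P (y2 t)) * (C / P (y2 t)) * (\<sigma> * R (y2 t) / P (y2 t))) (at t)"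
      using v_def by metis
    have Ed: "((\<lambda>t. E * P (y2 t) - C^2) has_real_derivative E * (P1 v * (\<sigma> * R v / P v)) - 0) (at t)"
      by (intro DERIV_diff DERIV_cmult Pd DERIV_const)
    have sq: "E * P v - C^2 > 0" using pos[OF v0] .
    have Rd: "((\<lambda>t. R (y2 t)) has_real_derivative inverse (R v) / 2 * (E * (P1 v * (\<sigma> * R v / P v)) - 0)) (at t)"
      unfolding v_def using DERIV_chain2[OF DERIV_real_sqrt[OF sq, unfolded v_def] Ed[unfolded v_def]] by (simp only: R_def[symmetric])
    have "((\<lambda>t. \<sigma> * R (y2 t) / P (y2 t)) has_real_derivative
        (\<sigma> * (inverse (R v) / 2 * (E * (P1 v * (\<sigma> * R v / P v)) - 0)) * P v - \<sigma> * R v * (P1 v * (\<sigma> * R v / P v))) / (P v * P v)) (at t)"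
      using DERIV_divide[OF DERIV_cmult[OF Rd, of \<sigma>] Pd] p unfolding v_def by simp
    moreover have "(\<sigma> * (inverse (R v) / 2 * (E * (P1 v * (\<sigma> * R v / P v)) - 0)) * P v - \<sigma> * R v * (P1 v * (\<sigma> * R v / P v))) / (P v * P v)
        = P1 v / (2 * P v) * ((C / P v)^2 - (\<sigma> * R v / P v)^2)"
    proof -
      have L: "(\<sigma> * (inverse (R v) / 2 * (E * (P1 v * (\<sigma> * R v / P v)) - 0)) * P v - \<sigma> * R v * (P1 v * (\<sigma> * R v / P v))) / (P v * P v)
          = P1 v * (E * P v - 2 * (R v)^2) / (2 * P v ^ 3)"
        using p r \<sigma>(1) by (elim insertE; simp add: field_simps power2_eq_square power3_eq_cube)
      have Rr: "(R v)^2 = E * P v - C^2" using Rsq[OF v0] .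
      have "P1 v / (2 * P v) * ((C / P v)^2 - (\<sigma> * R v / P v)^2) = P1 v * (C^2 - (R v)^2) / (2 * P v ^ 3)"
        using p s2 by (simp add: field_simps power2_eq_square power3_eq_cube)
      also have "\<dots> = P1 v * (E * P v - 2 * (R v)^2) / (2 * P v ^ 3)" proof - have "C^2 - (R v)^2 = E * P v - 2 * (R v)^2" using Rr by simp then show ?thesis by simp qed
      finally show ?thesis using L by simp
    qed
    ultimately have Y1d: "((\<lambda>t. \<sigma> * R (y2 t) / P (y2 t)) has_real_derivative P1 (y2 t) / (2 * P (y2 t)) * ((C / P (y2 t))^2 - (\<sigma> * R (y2 t) / P (y2 t))^2)) (at t)"
      using v_def by metis
    have ne: "\<sigma> * R (y2 t) / P (y2 t) \<noteq> 0" using r p s2 unfolding v_def by auto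
    show "y2 t > 0 \<and> (x2 has_real_derivative C / P (y2 t)) (at t) \<and> (y2 has_real_derivative \<sigma> * R (y2 t) / P (y2 t)) (at t) \<and>
      ((\<lambda>t. C / P (y2 t)) has_real_derivative - (P1 (y2 t) / P (y2 t)) * (C / P (y2 t)) * (\<sigma> * R (y2 t) / P (y2 t))) (at t) \<and>
      ((\<lambda>t. \<sigma> * R (y2 t) / P (y2 t)) has_real_derivative P1 (y2 t) / (2 * P (y2 t)) * ((C / P (y2 t))^2 - (\<sigma> * R (y2 t) / P (y2 t))^2)) (at t) \<and>
      (C / P (y2 t), \<sigma> * R (y2 t) / P (y2 t)) \<noteq> (0, 0)"
      using v0 x2d y2d X1d Y1d ne unfolding v_def by simp
  qed
  have geo2: "geodesic_on J x2 y2" by (rule geodesic_intro[OF J hyp])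
  note mx = max_ext[OF mg geo2 IJ ag]
  have img: "y2 ` J = D"
  proof
    show "y2 ` J \<subseteq> D"
    proof
      fix v assume "v \<in> y2 ` J"
      then obtain t where t: "t \<in> J" "v = y2 t" by blast
      then have "\<sigma> * t - d \<in> T ` D" unfolding J_def by simp
      then show "v \<in> D" using bspec[OF inv(4)] t(2) unfolding y2_def g_def by blast
    qed
    show "D \<subseteq> y2 ` J"
    proof
      fix v assume v: "v \<in> D"
      define t where "t = \<sigma> * (T v + d)"
      have st: "\<sigma> * t - d = T v" unfolding t_def using \<sigma>(1) by auto
      have "t \<in> J" unfolding J_def using st v by simp
      moreover have "y2 t = v" unfolding y2_def st g_def using inv(3) v by simp
      ultimately show "v \<in> y2 ` J" by (metis image_eqI)
    qed
  qed
  have "geo_trace I x y = (\<lambda>t. (x2 t, y2 t)) ` J" using mx(2) unfolding geo_trace_def .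
  also have "\<dots> = (\<lambda>v. (\<sigma> * G v + c, v)) ` (y2 ` J)" unfolding image_image x2_def Gs_def by simp
  finally have "geo_trace I x y = (\<lambda>v. (\<sigma> * G v + c, v)) ` (y2 ` J)" .
  then show ?thesis using \<sigma>(1) img unfolding D_def by (intro exI[of _ \<sigma>] exI[of _ c]) simp
qed


definition Yt :: "real \<Rightarrow> real \<Rightarrow> real" where "Yt A th = arcosh (A * cos th)"
definition Zt :: "real \<Rightarrow> real \<Rightarrow> real" where "Zt A th = - A * sin th / sinh (Yt A th)"
definition bt :: "real \<Rightarrow> real" where "bt A = arccos (1 / A)"

lemma bt_facts: assumes "A > 1" shows "0 < bt A" "bt A < pi/2" "cos (bt A) = 1 / A"
proof -
  have a: "0 < 1 / A" "1 / A < 1" using assms by auto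
  show "0 < bt A" unfolding bt_def using arccos_less_arccos[of "1/A" 1] a by simp
  show "bt A < pi/2" unfolding bt_def using arccos_less_arccos[of 0 "1/A"] a by simp
  have "- 1 \<le> 1 / A" "1 / A \<le> 1" using a by linarith+
  then show "cos (bt A) = 1 / A" unfolding bt_def by simp
qed

lemma cos_gt: assumes "A > 1" "\<bar>th\<bar> < bt A" shows "A * cos th > 1"
proof -
  note b = bt_facts[OF assms(1)]
  have "cos (bt A) < cos \<bar>th\<bar>"
    using cos_mono_less_eq[of "bt A" "\<bar>th\<bar>"] b assms(2) by simp
  then have "1 / A < cos th" using b(3) by simp
  then show ?thesis using assms(1) by (simp add: field_simps)
qed

lemma Yt_facts: assumes "A > 1" "\<bar>th\<bar> < bt A"
  shows "cosh (Yt A th) = A * cos th" "Yt A th > 0" "sinh (Yt A th) = sqrt ((A * cos th)^2 - 1)" "sinh (Yt A th) > 0"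
proof -
  have c: "A * cos th > 1" using cos_gt[OF assms] .
  show "cosh (Yt A th) = A * cos th" unfolding Yt_def using c by simp
  show p: "Yt A th > 0" unfolding Yt_def using c by simp
  show "sinh (Yt A th) = sqrt ((A * cos th)^2 - 1)" unfolding Yt_def using c sinh_arcosh_real by simp
  show "sinh (Yt A th) > 0" using p by simp
qed

lemma Yt_deriv: assumes "A > 1" "\<bar>th\<bar> < bt A"
  shows "(Yt A has_real_derivative Zt A th) (at th)"
proof -
  have c: "A * cos th > 1" using cos_gt[OF assms] .
  have "((\<lambda>th. arcosh (A * cos th)) has_real_derivative 1 / sqrt ((A * cos th)^2 - 1) * (A * - sin th)) (at th)"
  proof (rule DERIV_chain2[where f=arcosh and g="\<lambda>th. A * cos th"])
    show "(arcosh has_real_derivative 1 / sqrt ((A * cos th)^2 - 1)) (at (A * cos th))"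
      using arcosh_real_has_field_derivative[OF c, where A=UNIV] .
    show "((\<lambda>th. A * cos th) has_real_derivative A * - sin th) (at th)"
      by (auto intro!: derivative_eq_intros)
  qed
  moreover have "1 / sqrt ((A * cos th)^2 - 1) * (A * - sin th) = Zt A th"
    unfolding Zt_def Yt_facts(3)[OF assms] by simp
  ultimately show ?thesis unfolding Yt_def[abs_def] by simp
qed

lemma Zt_sq: assumes "A > 1" "\<bar>th\<bar> < bt A"
  shows "(Zt A th)^2 = (A^2 - cosh (Yt A th)^2) / sinh (Yt A th)^2"
proof -
  have "(Zt A th)^2 = A^2 * (sin th)^2 / sinh (Yt A th)^2" unfolding Zt_def by (simp add: power_divide power_mult_distrib)
  also have "A^2 * (sin th)^2 = A^2 - (A * cos th)^2" using sin_squared_eq[of th] by (simp add: right_diff_distrib power_mult_distrib)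
  finally show ?thesis unfolding Yt_facts(1)[OF assms] .
qed

lemma Zt_deriv: assumes A: "A > 1" and th: "\<bar>th\<bar> < bt A"
  shows "(Zt A has_real_derivative - cosh (Yt A th) * (A^2 - 1) / sinh (Yt A th)^3) (at th)"
proof -
  let ?Y = "Yt A th" and ?Z = "Zt A th"
  have sp: "sinh ?Y > 0" using Yt_facts(4)[OF A th] .
  have sd: "((\<lambda>th. sinh (Yt A th)) has_real_derivative cosh ?Y * ?Z) (at th)"
    using has_field_derivative_sinh[OF Yt_deriv[OF A th]] by simp
  have num: "((\<lambda>th. - A * sin th) has_real_derivative - A * cos th) (at th)"
    by (auto intro!: derivative_eq_intros)
  have "((\<lambda>th. - A * sin th / sinh (Yt A th)) has_real_derivative ((- A * cos th) * sinh ?Y - (- A * sin th) * (cosh ?Y * ?Z)) / (sinh ?Y * sinh ?Y)) (at th)"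
    by (rule DERIV_divide[OF num sd]) (use sp in simp)
  then have "(Zt A has_real_derivative ((- A * cos th) * sinh ?Y - (- A * sin th) * (cosh ?Y * ?Z)) / (sinh ?Y * sinh ?Y)) (at th)"
    by (rule has_field_derivative_transform_within_open[of _ _ _ UNIV]) (simp_all add: Zt_def)
  moreover have "((- A * cos th) * sinh ?Y - (- A * sin th) * (cosh ?Y * ?Z)) / (sinh ?Y * sinh ?Y)
      = - cosh ?Y * (A^2 - 1) / sinh ?Y ^3"
  proof -
    have e1: "A * cos th = cosh ?Y" using Yt_facts(1)[OF A th] by simp
    have e2: "A * sin th = - ?Z * sinh ?Y" unfolding Zt_def using sp by simp
    have e3: "?Z^2 * sinh ?Y ^2 = A^2 - cosh ?Y ^2" using Zt_sq[OF A th] sp by (simp add: field_simps)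
    have e4: "cosh ?Y ^2 = sinh ?Y ^2 + 1" by (rule cosh_square_eq)
    have "((- A * cos th) * sinh ?Y - (- A * sin th) * (cosh ?Y * ?Z)) = - cosh ?Y * sinh ?Y - ?Z * sinh ?Y * cosh ?Y * ?Z"
      using e1 e2 by (simp add: algebra_simps)
    also have "\<dots> = - cosh ?Y * sinh ?Y * (1 + ?Z^2)" by (simp add: algebra_simps power2_eq_square)
    finally have n: "((- A * cos th) * sinh ?Y - (- A * sin th) * (cosh ?Y * ?Z)) = - cosh ?Y * sinh ?Y * (1 + ?Z^2)" .
    have "(1 + ?Z^2) * sinh ?Y ^2 = A^2 - 1" using e3 e4 by (simp add: algebra_simps)
    then have z: "1 + ?Z^2 = (A^2 - 1) / sinh ?Y ^2" using sp by (simp add: field_simps)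
    show ?thesis unfolding n z using sp by (simp add: field_simps power2_eq_square power3_eq_cube)
  qed
  ultimately show ?thesis by simp
qed


lemma P_sinh: "v > 0 \<Longrightarrow> P v = ((sinh v)^2 + 3) / (4 * (sinh v)^2)"
  by (simp add: P_eq P2_def field_simps)

lemma alg_ii:
  fixes sh ch Z A k2 :: real
  assumes "sh > 0" "Z^2 = (A^2 - ch^2)/sh^2" "ch^2 = sh^2 + 1" "k2 = (2 + A^2)/3"
  shows "(- ch * (A^2 - 1) / sh^3) * ((sh^2+3)/(4 * sh^2)) = (-3 * ch/(2 * sh^3)) * (k2 + Z^2)/2"
proof -
  have hK: "k2 + Z^2 = (A^2 - 1) * (sh^2 + 3) / (3 * sh^2)"
    using assms by (simp add: field_simps power2_eq_square)
  show ?thesis apply (subst hK) using assms(1) by (simp add: field_simps power2_eq_square power3_eq_cube)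
qed

lemma typeii_construct:
  assumes mg: "maximal_geodesic I x y" and A: "A > 1" and kap: "\<kappa> = sqrt ((2 + A^2) / 3)"
    and C: "\<forall>t\<in>I. P (y t) * deriv x t = C" and C0: "C \<noteq> 0"
    and th: "\<forall>t\<in>I. \<bar>(x t - c) / \<kappa>\<bar> < bt A"
    and yt: "\<forall>t\<in>I. y t = Yt A ((x t - c) / \<kappa>)"
  shows "geo_trace I x y = (\<lambda>th. (c + \<kappa> * th, Yt A th)) ` {- bt A<..<bt A}"
proof -
  have g: "geodesic_on I x y" using mg maximal_geodesic_def by blast
  note u = geo_unpack[OF g]
  have A2: "2 + A^2 > 0" using zero_le_power2[of A] by linarith
  have kp: "\<kappa> > 0" unfolding kap using A2 by simp
  have k2: "\<kappa>^2 = (2 + A^2) / 3" unfolding kap using A2 by simp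
  obtain t0 where t0: "t0 \<in> I" using geo_interval(3)[OF g] by blast
  define D where "D = {- bt A<..<bt A}"
  have inD: "th \<in> D \<longleftrightarrow> \<bar>th\<bar> < bt A" for th unfolding D_def by auto
  have D: "open D" "is_interval D" unfolding D_def by (auto simp: is_interval_1)
  define \<sigma> where "\<sigma> = sgn C"
  have \<sigma>: "\<sigma> \<in> {1, -1}" "\<sigma> * C = \<bar>C\<bar>" "\<sigma> * \<sigma> = 1" using C0 unfolding \<sigma>_def by (auto simp: sgn_if)
  have dx: "deriv x t = C / P (y t)" if "t \<in> I" for t
    using C that P_pos[OF u(1)[OF that]] by (auto simp: field_simps)
  define \<tau> where "\<tau> th = \<kappa> * P (Yt A th) / \<bar>C\<bar>" for th
  have \<tau>pos: "\<tau> th > 0" if "th \<in> D" for th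
    unfolding \<tau>_def using kp C0 P_pos[OF Yt_facts(2)[OF A that[unfolded inD]]] by simp
  have contY: "continuous_on D (Yt A)"
    using Yt_deriv[OF A] DERIV_isCont continuous_at_imp_continuous_on inD by metis
  have contPY: "continuous_on D (\<lambda>th. P (Yt A th))"
    by (rule continuous_on_compose2[OF P_cont_on contY]) (use Yt_facts(2)[OF A] inD in auto)
  have cont\<tau>: "continuous_on D \<tau>" unfolding \<tau>_def[abs_def] by (intro continuous_intros contPY) (use C0 in simp)
  have 0: "0 \<in> D" unfolding inD using bt_facts(1)[OF A] by simp
  obtain T where T: "\<forall>th\<in>D. (T has_real_derivative \<tau> th) (at th)"
    using antideriv[OF D cont\<tau> 0] by blast
  define \<theta> where "\<theta> t = (x t - c) / \<kappa>" for t
  have \<theta>D: "\<theta> t \<in> D" if "t \<in> I" for t using th that unfolding \<theta>_def inD by simp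
  have yth: "y t = Yt A (\<theta> t)" if "t \<in> I" for t using yt that unfolding \<theta>_def by simp
  have d\<theta>: "(\<theta> has_real_derivative C / (\<kappa> * P (y t))) (at t)" if t: "t \<in> I" for t
  proof -
    have "(\<theta> has_real_derivative (deriv x t - 0) / \<kappa>) (at t)"
      unfolding \<theta>_def[abs_def] by (intro DERIV_cdivide DERIV_diff u(2)[OF t] DERIV_const)
    then show ?thesis using dx[OF t] kp by (simp add: mult.commute)
  qed
  have "\<exists>d. \<forall>t\<in>I. \<sigma> * t - T (\<theta> t) = d"
  proof (rule zero_deriv_const[OF geo_interval(4)[OF g]])
    fix t assume t: "t \<in> I"
    have Td: "(T has_real_derivative \<tau> (\<theta> t)) (at (\<theta> t))" using T \<theta>D[OF t] by simp
    have "((\<lambda>t. \<sigma> * t - T (\<theta> t)) has_real_derivative \<sigma> * 1 - \<tau> (\<theta> t) * (C / (\<kappa> * P (y t)))) (at t)"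
      by (intro DERIV_diff DERIV_cmult DERIV_ident DERIV_chain2[OF Td d\<theta>[OF t]])
    moreover have "\<sigma> * 1 - \<tau> (\<theta> t) * (C / (\<kappa> * P (y t))) = 0"
    proof -
      have p: "P (y t) > 0" using P_pos[OF u(1)[OF t]] .
      have "\<tau> (\<theta> t) * (C / (\<kappa> * P (y t))) = C / \<bar>C\<bar>" unfolding \<tau>_def yth[OF t, symmetric]
        using p kp C0 by (simp add: field_simps)
      also have "\<dots> = \<sigma>" using \<sigma>(1) C0 unfolding \<sigma>_def by (auto simp: sgn_if)
      finally show ?thesis by simp
    qed
    ultimately show "((\<lambda>t. \<sigma> * t - T (\<theta> t)) has_real_derivative 0) (at t)" by simp
  qed
  then obtain d where d: "\<forall>t\<in>I. \<sigma> * t - T (\<theta> t) = d" by blast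
  have dD: "\<And>v. v \<in> D \<Longrightarrow> (T has_real_derivative \<tau> v) (at v) \<and> \<tau> v > 0"
    using T \<tau>pos by auto
  note inv = inverse_fun[OF D dD]
  define g where "g = inv_into D T"
  define J where "J = {t. \<sigma> * t - d \<in> T ` D}"
  define \<theta>2 where "\<theta>2 t = g (\<sigma> * t - d)" for t
  define y2 where "y2 t = Yt A (\<theta>2 t)" for t
  define x2 where "x2 t = c + \<kappa> * \<theta>2 t" for t
  have IJ: "I \<subseteq> J"
  proof
    fix t assume t: "t \<in> I"
    have "\<sigma> * t - d = T (\<theta> t)" using d t by force
    then show "t \<in> J" unfolding J_def using \<theta>D[OF t] by simp
  qed
  have ag: "\<forall>t\<in>I. x2 t = x t \<and> y2 t = y t"
  proof
    fix t assume t: "t \<in> I"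
    have "\<sigma> * t - d = T (\<theta> t)" using d t by force
    then have e: "\<theta>2 t = \<theta> t" unfolding \<theta>2_def g_def using inv(3) \<theta>D[OF t] by simp
    have "x2 t = x t" unfolding x2_def e \<theta>_def using kp by simp
    moreover have "y2 t = y t" unfolding y2_def e using yth[OF t] by simp
    ultimately show "x2 t = x t \<and> y2 t = y t" by simp
  qed
  have Jne: "J \<noteq> {}" using IJ t0 by blast
  have J: "open J" "is_interval J" "J \<noteq> {}"
    using affine_J[OF inv(1,2) \<sigma>(1), of d] Jne unfolding J_def by auto
  have hyp: "y2 t > 0 \<and> (x2 has_real_derivative C / P (y2 t)) (at t) \<and>
      (y2 has_real_derivative Zt A (\<theta>2 t) * C / (\<kappa> * P (y2 t))) (at t) \<and>
      ((\<lambda>t. C / P (y2 t)) has_real_derivative - (P1 (y2 t) / P (y2 t)) * (C / P (y2 t)) * (Zt A (\<theta>2 t) * C / (\<kappa> * P (y2 t)))) (at t) \<and>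
      ((\<lambda>t. Zt A (\<theta>2 t) * C / (\<kappa> * P (y2 t))) has_real_derivative
          P1 (y2 t) / (2 * P (y2 t)) * ((C / P (y2 t))^2 - (Zt A (\<theta>2 t) * C / (\<kappa> * P (y2 t)))^2)) (at t) \<and>
      (C / P (y2 t), Zt A (\<theta>2 t) * C / (\<kappa> * P (y2 t))) \<noteq> (0, 0)" if t: "t \<in> J" for t
  proof -
    define s where "s = \<sigma> * t - d"
    have sJ: "s \<in> T ` D" using t unfolding J_def s_def by simp
    define w where "w = \<theta>2 t"
    have w: "w = g s" unfolding w_def \<theta>2_def s_def by simp
    have wD: "w \<in> D" using bspec[OF inv(4) sJ] w unfolding g_def by simp
    have wb: "\<bar>w\<bar> < bt A" using wD inD by simp
    define v where "v = y2 t"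
    have v: "v = Yt A w" unfolding v_def y2_def w_def by simp
    have v0: "v > 0" using Yt_facts(2)[OF A wb] v by simp
    have p: "P v > 0" using P_pos[OF v0] .
    have gd: "(g has_real_derivative inverse (\<tau> w)) (at s)" using bspec[OF inv(5) sJ] w unfolding g_def by simp
    have lin: "((\<lambda>t. \<sigma> * t - d) has_real_derivative \<sigma>) (at t)"
      using DERIV_diff[OF DERIV_cmult[OF DERIV_ident, of \<sigma>] DERIV_const[of d]] by simp
    have "(\<theta>2 has_real_derivative inverse (\<tau> w) * \<sigma>) (at t)"
      unfolding \<theta>2_def[abs_def] using DERIV_chain2[OF gd[unfolded s_def] lin] by simp
    moreover have "inverse (\<tau> w) * \<sigma> = C / (\<kappa> * P v)"
    proof -
      have "inverse (\<tau> w) * \<sigma> = \<sigma> * \<bar>C\<bar> / (\<kappa> * P v)" unfolding \<tau>_def v[symmetric] using p kp C0 by (simp add: field_simps)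
      also have "\<sigma> * \<bar>C\<bar> = C" using \<sigma>(2,3) by (metis mult.assoc mult_1)
      finally show ?thesis .
    qed
    ultimately have th2d: "(\<theta>2 has_real_derivative C / (\<kappa> * P (y2 t))) (at t)" unfolding v_def by simp
    have x2d: "(x2 has_real_derivative C / P (y2 t)) (at t)"
    proof -
      have "(x2 has_real_derivative 0 + \<kappa> * (C / (\<kappa> * P (y2 t)))) (at t)"
        unfolding x2_def[abs_def] by (intro DERIV_add DERIV_const DERIV_cmult th2d)
      then show ?thesis using kp by simp
    qed
    have y2d: "(y2 has_real_derivative Zt A (\<theta>2 t) * C / (\<kappa> * P (y2 t))) (at t)"
    proof -
      have "(y2 has_real_derivative Zt A (\<theta>2 t) * (C / (\<kappa> * P (y2 t)))) (at t)"
        unfolding y2_def[abs_def] using DERIV_chain2[OF Yt_deriv[OF A wb[unfolded w_def]] th2d] by (simp add: y2_def)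
      then show ?thesis by simp
    qed
    define Y1 where "Y1 = Zt A w * C / (\<kappa> * P v)"
    have Pd: "((\<lambda>t. P (y2 t)) has_real_derivative P1 v * Y1) (at t)"
      unfolding v_def Y1_def w_def using DERIV_chain2[OF P_deriv[OF v0, unfolded v_def] y2d] by simp
    have "((\<lambda>t. C / P (y2 t)) has_real_derivative (0 * P v - C * (P1 v * Y1)) / (P v * P v)) (at t)"
      using DERIV_divide[OF DERIV_const Pd] p unfolding v_def by simp
    moreover have "(0 * P v - C * (P1 v * Y1)) / (P v * P v) = - (P1 v / P v) * (C / P v) * Y1"
      using p by (simp add: field_simps)
    ultimately have X1d: "((\<lambda>t. C / P (y2 t)) has_real_derivative - (P1 (y2 t) / P (y2 t)) * (C / P (y2 t)) * (Zt A (\<theta>2 t) * C / (\<kappa> * P (y2 t)))) (at t)"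
      unfolding Y1_def using v_def w_def by metis
    have Zd: "((\<lambda>t. Zt A (\<theta>2 t)) has_real_derivative (- cosh v * (A^2 - 1) / sinh v ^3) * (C / (\<kappa> * P v))) (at t)"
      unfolding v w_def using DERIV_chain2[OF Zt_deriv[OF A wb[unfolded w_def]] th2d] unfolding y2_def by simp
    have "((\<lambda>t. Zt A (\<theta>2 t) * C / (\<kappa> * P (y2 t))) has_real_derivative
        ((- cosh v * (A^2 - 1) / sinh v ^3) * (C / (\<kappa> * P v)) * C * (\<kappa> * P v) - Zt A w * C * (\<kappa> * (P1 v * Y1))) / ((\<kappa> * P v) * (\<kappa> * P v))) (at t)"
    proof -
      have a1: "((\<lambda>t. Zt A (\<theta>2 t) * C) has_real_derivative (- cosh v * (A^2 - 1) / sinh v ^3) * (C / (\<kappa> * P v)) * C) (at t)"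
        using DERIV_mult[OF Zd DERIV_const[of C]] by simp
      have a2: "((\<lambda>t. \<kappa> * P (y2 t)) has_real_derivative \<kappa> * (P1 v * Y1)) (at t)"
        using DERIV_cmult[OF Pd] .
      show ?thesis using DERIV_divide[OF a1 a2] p kp unfolding v_def w_def by simp
    qed
    moreover have "((- cosh v * (A^2 - 1) / sinh v ^3) * (C / (\<kappa> * P v)) * C * (\<kappa> * P v) - Zt A w * C * (\<kappa> * (P1 v * Y1))) / ((\<kappa> * P v) * (\<kappa> * P v))
        = P1 v / (2 * P v) * ((C / P v)^2 - Y1^2)"
    proof -
      define Z where "Z = Zt A w"
      define Zp where "Zp = - cosh v * (A^2 - 1) / sinh v ^3"
      have sh: "sinh v > 0" using v0 by simp
      have Zsq: "Z^2 = (A^2 - (cosh v)^2) / (sinh v)^2" unfolding Z_def v using Zt_sq[OF A wb] .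
      have key: "Zp * P v = P1 v * (\<kappa>^2 + Z^2) / 2"
        unfolding Zp_def P_sinh[OF v0] P1_def
        using alg_ii[OF sh Zsq cosh_square_eq k2] by simp
      have L: "(Zp * (C / (\<kappa> * P v)) * C * (\<kappa> * P v) - Z * C * (\<kappa> * (P1 v * (Z * C / (\<kappa> * P v))))) / ((\<kappa> * P v) * (\<kappa> * P v))
          = C^2 * (Zp * P v - Z^2 * P1 v) / (\<kappa>^2 * P v ^3)"
        using p kp by (simp add: field_simps power2_eq_square power3_eq_cube)
      have R: "P1 v / (2 * P v) * ((C / P v)^2 - (Z * C / (\<kappa> * P v))^2) = C^2 * (P1 v * (\<kappa>^2 - Z^2) / 2) / (\<kappa>^2 * P v ^3)"
        using p kp by (simp add: field_simps power2_eq_square power3_eq_cube)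
      have "Zp * P v - Z^2 * P1 v = P1 v * (\<kappa>^2 - Z^2) / 2" using key by (simp add: field_simps)
      then have h2: "C^2 * (Zp * P v - Z^2 * P1 v) / (\<kappa>^2 * P v ^3) = C^2 * (P1 v * (\<kappa>^2 - Z^2) / 2) / (\<kappa>^2 * P v ^3)" by (rule arg_cong[where f="\<lambda>u. C^2 * u / (\<kappa>^2 * P v ^3)"])
      have "(Zp * (C / (\<kappa> * P v)) * C * (\<kappa> * P v) - Z * C * (\<kappa> * (P1 v * (Z * C / (\<kappa> * P v))))) / ((\<kappa> * P v) * (\<kappa> * P v))
         = P1 v / (2 * P v) * ((C / P v)^2 - (Z * C / (\<kappa> * P v))^2)" using L R h2 by metis
      then show ?thesis unfolding Y1_def Z_def Zp_def .
    qed
    ultimately have Y1d: "((\<lambda>t. Zt A (\<theta>2 t) * C / (\<kappa> * P (y2 t))) has_real_derivative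
          P1 (y2 t) / (2 * P (y2 t)) * ((C / P (y2 t))^2 - (Zt A (\<theta>2 t) * C / (\<kappa> * P (y2 t)))^2)) (at t)"
      unfolding Y1_def using v_def w_def by metis
    have ne: "C / P (y2 t) \<noteq> 0" using C0 p unfolding v_def by simp
    show ?thesis using v0 x2d y2d X1d Y1d ne unfolding v_def by simp
  qed
  have geo2: "geodesic_on J x2 y2" by (rule geodesic_intro[OF J hyp])
  note mx = max_ext[OF mg geo2 IJ ag]
  have img: "\<theta>2 ` J = D"
  proof
    show "\<theta>2 ` J \<subseteq> D"
    proof
      fix v assume "v \<in> \<theta>2 ` J"
      then obtain t where t: "t \<in> J" "v = \<theta>2 t" by blast
      then have "\<sigma> * t - d \<in> T ` D" unfolding J_def by simp
      then show "v \<in> D" using bspec[OF inv(4)] t(2) unfolding \<theta>2_def g_def by blast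
    qed
    show "D \<subseteq> \<theta>2 ` J"
    proof
      fix v assume v: "v \<in> D"
      define t where "t = \<sigma> * (T v + d)"
      have st: "\<sigma> * t - d = T v" unfolding t_def using \<sigma>(1) by auto
      have "t \<in> J" unfolding J_def using st v by simp
      moreover have "\<theta>2 t = v" unfolding \<theta>2_def st g_def using inv(3) v by simp
      ultimately show "v \<in> \<theta>2 ` J" by (metis image_eqI)
    qed
  qed
  have "geo_trace I x y = (\<lambda>t. (x2 t, y2 t)) ` J" using mx(2) unfolding geo_trace_def .
  also have "\<dots> = (\<lambda>th. (c + \<kappa> * th, Yt A th)) ` (\<theta>2 ` J)" unfolding image_image x2_def y2_def by simp
  finally show ?thesis unfolding img D_def .
qed


lemma KI2: "v > 0 \<Longrightarrow> cosh v * (P v - 1/4) + sinh v * P1 v / 2 = 0"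
proof -
  assume v: "v > 0"
  have s: "sinh v > 0" using v by simp
  show ?thesis unfolding P_eq[OF v] P2_def P1_def using s by (simp add: field_simps power2_eq_square power3_eq_cube)
qed

lemma KI1: "v > 0 \<Longrightarrow> 4 * (sinh v)^2 * P v = (sinh v)^2 + 3"
proof -
  assume v: "v > 0"
  have s: "sinh v > 0" using v by simp
  show ?thesis unfolding P_eq[OF v] P2_def using s by (simp add: field_simps power2_eq_square)
qed

lemma typeii_analysis:
  assumes g: "geodesic_on I x y"
    and C: "\<forall>t\<in>I. P (y t) * deriv x t = C"
    and E: "\<forall>t\<in>I. P (y t) * ((deriv x t)^2 + (deriv y t)^2) = E"
    and C0: "C \<noteq> 0" and Q: "4 * C^2 > E"
    and sdef: "s = sqrt (3 * E / (4 * C^2 - E))" and adef: "a = arsinh s" and Adef: "A = cosh a"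
    and kdef: "\<kappa> = sqrt ((2 + A^2) / 3)"
  shows "a > 0" "A > 1" "\<exists>c. \<forall>t\<in>I. \<bar>(x t - c) / \<kappa>\<bar> < bt A \<and> y t = Yt A ((x t - c) / \<kappa>) \<and>
           \<kappa> * (sinh (y t) * P (y t) * deriv y t / C) = - A * sin ((x t - c) / \<kappa>)"
proof -
  note u = geo_unpack[OF g]
  note cf = cons_facts[OF g C E]
  obtain t0 where t0: "t0 \<in> I" using geo_interval(3)[OF g] by blast
  have E0: "E > 0" using cf(1)[OF t0] .
  define Qv where "Qv = 4 * C^2 - E"
  have Qv: "Qv > 0" using Q unfolding Qv_def by simp
  have s2: "s^2 = 3 * E / Qv" unfolding sdef Qv_def using E0 Qv[unfolded Qv_def] by simp
  have sp: "s > 0" unfolding sdef using E0 Qv[unfolded Qv_def] by simp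
  have sha: "sinh a = s" unfolding adef by simp
  show a0: "a > 0" using sha sp sinh_real_pos_iff by metis
  have A2: "A^2 = 1 + s^2" unfolding Adef using cosh_square_eq[of a] sha by simp
  have Apos: "A > 0" unfolding Adef by simp
  show A1: "A > 1"
  proof -
    have "A^2 > 1" using A2 sp by simp
    show ?thesis
    proof (rule ccontr)
      assume "\<not> A > 1"
      then have "A \<le> 1" by simp
      then have "A^2 \<le> 1" using Apos by (simp add: power_le_one)
      then show False using \<open>A^2 > 1\<close> by simp
    qed
  qed
  have A2p: "2 + A^2 > 0" using zero_le_power2[of A] by linarith
  have kp: "\<kappa> > 0" unfolding kdef using A2p by simp
  have k2: "\<kappa>^2 = 4 * C^2 / Qv"
  proof -
    have "\<kappa>^2 = (2 + A^2) / 3" unfolding kdef using A2p by simp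
    also have "\<dots> = (3 + 3 * E / Qv) / 3" unfolding A2 s2 by simp
    also have "\<dots> = 4 * C^2 / Qv" using Qv unfolding Qv_def by (simp add: field_simps)
    finally show ?thesis .
  qed
  define U where "U t = cosh (y t)" for t
  define V where "V t = sinh (y t) * P (y t) * deriv y t / C" for t
  have I1: "(U t)^2 + \<kappa>^2 * (V t)^2 = A^2" if t: "t \<in> I" for t
  proof -
    have y0: "y t > 0" using u(1)[OF t] .
    have V2: "(V t)^2 = (sinh (y t))^2 * (E * P (y t) - C^2) / C^2"
      unfolding V_def using cf(3)[OF t] by (simp add: power_mult_distrib power_divide)
    have "\<kappa>^2 * (V t)^2 = 4 * (sinh (y t))^2 * (E * P (y t) - C^2) / Qv"
      unfolding V2 k2 using C0 Qv by (simp add: field_simps power2_eq_square)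
    also have "4 * (sinh (y t))^2 * (E * P (y t) - C^2) = E * (4 * (sinh (y t))^2 * P (y t)) - 4 * C^2 * (sinh (y t))^2"
      by (simp add: algebra_simps)
    also have "\<dots> = 3 * E - Qv * (sinh (y t))^2" unfolding KI1[OF y0] Qv_def by (simp add: algebra_simps)
    finally have "\<kappa>^2 * (V t)^2 = s^2 - (sinh (y t))^2" unfolding s2 using Qv by (simp add: field_simps)
    then show ?thesis unfolding U_def A2 using cosh_square_eq[of "y t"] by simp
  qed
  have dU: "(U has_real_derivative V t * deriv x t) (at t)" if t: "t \<in> I" for t
  proof -
    have p: "P (y t) > 0" using P_pos[OF u(1)[OF t]] .
    have "(U has_real_derivative sinh (y t) * deriv y t) (at t)"
      unfolding U_def[abs_def] using has_field_derivative_cosh[OF u(3)[OF t]] .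
    moreover have "V t * deriv x t = sinh (y t) * deriv y t"
      unfolding V_def cf(2)[OF t] using p C0 by (simp add: field_simps)
    ultimately show ?thesis by simp
  qed
  have dV: "(V has_real_derivative - U t * deriv x t / \<kappa>^2) (at t)" if t: "t \<in> I" for t
  proof -
    have y0: "y t > 0" using u(1)[OF t] .
    have p: "P (y t) > 0" using P_pos[OF y0] .
    let ?ch = "cosh (y t)" and ?sh = "sinh (y t)" and ?p = "P (y t)" and ?q = "P1 (y t)"
      and ?yy = "deriv y t" and ?xx = "deriv x t"
    have d1: "((\<lambda>t. sinh (y t)) has_real_derivative ?ch * ?yy) (at t)"
      using has_field_derivative_sinh[OF u(3)[OF t]] .
    have d2: "((\<lambda>t. P (y t)) has_real_derivative ?q * ?yy) (at t)"
      using DERIV_chain2[OF P_deriv[OF y0] u(3)[OF t]] .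
    have d3: "(deriv y has_real_derivative ?q / (2 * ?p) * (?xx^2 - ?yy^2)) (at t)"
      using u(5)[OF t] by simp
    have "(V has_real_derivative (((?ch * ?yy) * ?p + (?q * ?yy) * ?sh) * ?yy + (?q / (2 * ?p) * (?xx^2 - ?yy^2)) * (?sh * ?p)) / C) (at t)"
      unfolding V_def[abs_def] by (intro DERIV_cdivide DERIV_mult d1 d2 d3)
    moreover have "(((?ch * ?yy) * ?p + (?q * ?yy) * ?sh) * ?yy + (?q / (2 * ?p) * (?xx^2 - ?yy^2)) * (?sh * ?p)) / C
        = - U t * deriv x t / \<kappa>^2"
    proof -
      have N1: "((?ch * ?yy) * ?p + (?q * ?yy) * ?sh) * ?yy + (?q / (2 * ?p) * (?xx^2 - ?yy^2)) * (?sh * ?p)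
          = ?ch * (?p * ?yy^2) + ?sh * ?q * (?xx^2 + ?yy^2) / 2"
        using p by (simp add: field_simps power2_eq_square)
      have e1: "?p * ?yy^2 = (E * ?p - C^2) / ?p" using cf(3)[OF t] p by (simp add: field_simps power2_eq_square)
      have e2: "?xx^2 + ?yy^2 = E / ?p" using E t p by (simp add: field_simps)
      have k: "?sh * ?q / 2 = - ?ch * (?p - 1/4)" using KI2[OF y0] by (simp add: algebra_simps)
      have "?ch * (?p * ?yy^2) + ?sh * ?q * (?xx^2 + ?yy^2) / 2 = ?ch * (E * ?p - C^2) / ?p + (?sh * ?q / 2) * (E / ?p)"
        unfolding e1 e2 by (simp add: algebra_simps)
      also have "\<dots> = ?ch * (E * ?p - C^2) / ?p - ?ch * (?p - 1/4) * (E / ?p)" unfolding k by simp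
      also have "\<dots> = - ?ch * Qv / (4 * ?p)" unfolding Qv_def using p by (simp add: field_simps)
      finally have N: "((?ch * ?yy) * ?p + (?q * ?yy) * ?sh) * ?yy + (?q / (2 * ?p) * (?xx^2 - ?yy^2)) * (?sh * ?p) = - ?ch * Qv / (4 * ?p)"
        using N1 by simp
      have "- U t * deriv x t / \<kappa>^2 = - ?ch * (C / ?p) * Qv / (4 * C^2)"
        unfolding U_def cf(2)[OF t] k2 using Qv C0 by (simp add: field_simps)
      also have "\<dots> = (- ?ch * Qv / (4 * ?p)) / C" using C0 p by (simp add: field_simps power2_eq_square)
      finally show ?thesis unfolding N by simp
    qed
    ultimately show ?thesis by simp
  qed
  define W where "W c t = (U t - A * cos ((x t - c) / \<kappa>)) * (U t - A * cos ((x t - c) / \<kappa>))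
      + (\<kappa> * V t + A * sin ((x t - c) / \<kappa>)) * (\<kappa> * V t + A * sin ((x t - c) / \<kappa>))" for c t
  have dW: "(W c has_real_derivative 0) (at t)" if t: "t \<in> I" for c t
  proof -
    let ?th = "(x t - c) / \<kappa>" and ?xx = "deriv x t"
    have dth: "((\<lambda>t. (x t - c) / \<kappa>) has_real_derivative (?xx - 0) / \<kappa>) (at t)"
      by (intro DERIV_cdivide DERIV_diff u(2)[OF t] DERIV_const)
    have df: "((\<lambda>t. U t - A * cos ((x t - c) / \<kappa>)) has_real_derivative V t * ?xx - A * (- sin ?th * ((?xx - 0) / \<kappa>))) (at t)"
      by (intro DERIV_diff DERIV_cmult dU[OF t] DERIV_fun_cos dth)
    have dg: "((\<lambda>t. \<kappa> * V t + A * sin ((x t - c) / \<kappa>)) has_real_derivative \<kappa> * (- U t * ?xx / \<kappa>^2) + A * (cos ?th * ((?xx - 0) / \<kappa>))) (at t)"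
      by (intro DERIV_add DERIV_cmult dV[OF t] DERIV_fun_sin dth)
    define f where "f = U t - A * cos ?th"
    define gg where "gg = \<kappa> * V t + A * sin ?th"
    have f': "V t * ?xx - A * (- sin ?th * ((?xx - 0) / \<kappa>)) = (?xx / \<kappa>) * gg"
      unfolding gg_def using kp by (simp add: field_simps)
    have g': "\<kappa> * (- U t * ?xx / \<kappa>^2) + A * (cos ?th * ((?xx - 0) / \<kappa>)) = - (?xx / \<kappa>) * f"
      unfolding f_def using kp by (simp add: field_simps power2_eq_square)
    have "(W c has_real_derivative ((?xx / \<kappa>) * gg) * f + ((?xx / \<kappa>) * gg) * f + ((- (?xx / \<kappa>) * f) * gg + (- (?xx / \<kappa>) * f) * gg)) (at t)"
      unfolding W_def[abs_def] f_def gg_def using DERIV_add[OF DERIV_mult[OF df df] DERIV_mult[OF dg dg]]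
      unfolding f'[unfolded gg_def] g'[unfolded f_def] .
    then show ?thesis by (simp add: algebra_simps)
  qed
  have Ugt: "U t > 1" if t: "t \<in> I" for t
  proof -
    have "sinh (y t) > 0" using u(1)[OF t] by simp
    then have "(U t)^2 > 1" unfolding U_def using cosh_square_eq[of "y t"] by simp
    moreover have "U t > 0" unfolding U_def by simp
    ultimately show ?thesis by (smt (verit) power_le_one)
  qed
  define U0 where "U0 = U t0"
  define V0 where "V0 = V t0"
  have U01: "U0 > 1" unfolding U0_def using Ugt[OF t0] .
  have UA: "A^2 - U0^2 = (\<kappa> * V0)^2" using I1[OF t0] unfolding U0_def V0_def by (simp add: power_mult_distrib)
  have U0A: "U0 \<le> A"
  proof (rule ccontr)
    assume "\<not> U0 \<le> A"
    then have "A < U0" by simp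
    then have "A^2 < U0^2" using Apos by (simp add: power_strict_mono)
    moreover have "(\<kappa> * V0)^2 \<ge> 0" by simp
    ultimately show False using UA by simp
  qed
  define r where "r = U0 / A"
  have r: "1 / A < r" "r \<le> 1" "- 1 \<le> 1 / A" "0 < r"
    unfolding r_def using U01 U0A Apos A1 by (auto simp: field_simps)
  define \<phi> where "\<phi> = arccos r"
  have \<phi>b: "\<phi> < bt A" unfolding \<phi>_def bt_def using arccos_less_arccos[OF r(3) r(1) r(2)] .
  have \<phi>0: "0 \<le> \<phi>" unfolding \<phi>_def using arccos_lbound r by simp
  have cos\<phi>: "cos \<phi> = r" unfolding \<phi>_def using r by simp
  have Asin: "A * sin \<phi> = \<bar>\<kappa> * V0\<bar>"
  proof -
    have "sin \<phi> = sqrt (1 - r^2)" unfolding \<phi>_def using r by (simp add: sin_arccos)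
    then have "A * sin \<phi> = sqrt (A^2) * sqrt (1 - r^2)" using Apos by simp
    also have "\<dots> = sqrt (A^2 * (1 - r^2))" by (simp add: real_sqrt_mult)
    also have "A^2 * (1 - r^2) = A^2 - U0^2" unfolding r_def using Apos by (simp add: field_simps power2_eq_square)
    finally show ?thesis unfolding UA by simp
  qed
  define \<theta>0 where "\<theta>0 = (if V0 \<ge> 0 then - \<phi> else \<phi>)"
  have th0: "\<bar>\<theta>0\<bar> < bt A" "A * cos \<theta>0 = U0" "A * sin \<theta>0 = - (\<kappa> * V0)"
  proof -
    show "\<bar>\<theta>0\<bar> < bt A" unfolding \<theta>0_def using \<phi>b \<phi>0 by auto
    show "A * cos \<theta>0 = U0" unfolding \<theta>0_def using cos\<phi> Apos unfolding r_def by auto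
    show "A * sin \<theta>0 = - (\<kappa> * V0)" unfolding \<theta>0_def using Asin kp by (cases "V0 \<ge> 0") (auto simp: abs_if mult_less_0_iff)
  qed
  define c where "c = x t0 - \<kappa> * \<theta>0"
  have tht0: "(x t0 - c) / \<kappa> = \<theta>0" unfolding c_def using kp by simp
  obtain w where w: "\<forall>t\<in>I. W c t = w" using zero_deriv_const[OF geo_interval(4)[OF g] dW[of _ c]] by blast
  have Wt0: "W c t0 = 0" unfolding W_def tht0 U0_def[symmetric] V0_def[symmetric] th0(2) th0(3) by simp
  define \<theta> where "\<theta> t = (x t - c) / \<kappa>" for t
  have rel: "U t = A * cos (\<theta> t) \<and> \<kappa> * V t = - A * sin (\<theta> t)" if t: "t \<in> I" for t
  proof -
    have "W c t = 0" using w t t0 Wt0 by auto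
    then have "(U t - A * cos (\<theta> t)) * (U t - A * cos (\<theta> t)) + (\<kappa> * V t + A * sin (\<theta> t)) * (\<kappa> * V t + A * sin (\<theta> t)) = 0"
      unfolding W_def \<theta>_def .
    then have "U t - A * cos (\<theta> t) = 0 \<and> \<kappa> * V t + A * sin (\<theta> t) = 0"
      using sum_squares_eq_zero_iff by blast
    then show ?thesis by simp
  qed
  have cont\<theta>: "continuous_on I \<theta>" unfolding \<theta>_def[abs_def]
    by (intro continuous_intros deriv_cont(4)[OF g]) (use kp in simp)
  have iv: "is_interval (\<theta> ` I)"
    using geo_interval(5)[OF g] cont\<theta> connected_continuous_image is_interval_connected_1 by blast
  have J: "\<And>p q z. p \<in> \<theta> ` I \<Longrightarrow> q \<in> \<theta> ` I \<Longrightarrow> p \<le> z \<Longrightarrow> z \<le> q \<Longrightarrow> z \<in> \<theta> ` I"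
    using iv[unfolded is_interval_1] by blast
  have th0I: "\<theta> t0 = \<theta>0" unfolding \<theta>_def using tht0 .
  have notb: "\<theta> t \<noteq> bt A \<and> \<theta> t \<noteq> - bt A" if t: "t \<in> I" for t
  proof -
    have "A * cos (bt A) = 1" "A * cos (- bt A) = 1" using bt_facts(3)[OF A1] Apos by auto
    then show ?thesis using rel[OF t] Ugt[OF t] by auto
  qed
  have thb: "\<bar>\<theta> t\<bar> < bt A" if t: "t \<in> I" for t
  proof (rule ccontr)
    assume "\<not> \<bar>\<theta> t\<bar> < bt A"
    then consider "\<theta> t \<ge> bt A" | "\<theta> t \<le> - bt A" by linarith
    then show False
    proof cases
      case 1
      have "\<theta>0 \<le> bt A" using th0(1) by simp
      then have "bt A \<in> \<theta> ` I" using J[of "\<theta> t0" "\<theta> t" "bt A"] t t0 1 th0I by auto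
      then obtain t' where "t' \<in> I" "\<theta> t' = bt A" by auto
      then show False using notb by blast
    next
      case 2
      have "- bt A \<le> \<theta>0" using th0(1) by simp
      then have "- bt A \<in> \<theta> ` I" using J[of "\<theta> t" "\<theta> t0" "- bt A"] t t0 2 th0I by auto
      then obtain t' where "t' \<in> I" "\<theta> t' = - bt A" by auto
      then show False using notb by blast
    qed
  qed
  show "\<exists>c. \<forall>t\<in>I. \<bar>(x t - c) / \<kappa>\<bar> < bt A \<and> y t = Yt A ((x t - c) / \<kappa>) \<and>
           \<kappa> * (sinh (y t) * P (y t) * deriv y t / C) = - A * sin ((x t - c) / \<kappa>)"
  proof (intro exI[of _ c] ballI conjI)
    fix t assume t: "t \<in> I"
    show "\<bar>(x t - c) / \<kappa>\<bar> < bt A" using thb[OF t] unfolding \<theta>_def .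
    have "Yt A (\<theta> t) = arcosh (cosh (y t))" unfolding Yt_def using rel[OF t] unfolding U_def by simp
    also have "\<dots> = y t" using u(1)[OF t] by (simp add: arcosh_cosh_real)
    finally show "y t = Yt A ((x t - c) / \<kappa>)" unfolding \<theta>_def by simp
    show "\<kappa> * (sinh (y t) * P (y t) * deriv y t / C) = - A * sin ((x t - c) / \<kappa>)"
      using rel[OF t] unfolding V_def \<theta>_def by simp
  qed
qed


lemma arccos_cos_abs: "\<bar>th\<bar> \<le> pi \<Longrightarrow> arccos (cos th) = \<bar>th\<bar>"
proof (cases "th \<ge> 0")
  case True
  assume "\<bar>th\<bar> \<le> pi" then show ?thesis using True arccos_cos by simp
next
  case False
  assume "\<bar>th\<bar> \<le> pi" then show ?thesis using False arccos_cos2[of th] by simp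
qed

lemma typeii_full:
  assumes mg: "maximal_geodesic I x y"
    and C: "\<forall>t\<in>I. P (y t) * deriv x t = C"
    and E: "\<forall>t\<in>I. P (y t) * ((deriv x t)^2 + (deriv y t)^2) = E"
    and C0: "C \<noteq> 0" and Q: "4 * C^2 > E"
  shows "\<exists>c a. a > 0 \<and> geo_trace I x y = hmove 1 c ` curve_ii a \<and> (\<exists>t1\<in>I. deriv y t1 = 0)"
proof -
  have g: "geodesic_on I x y" using mg maximal_geodesic_def by blast
  note u = geo_unpack[OF g]
  define s where "s = sqrt (3 * E / (4 * C^2 - E))"
  define a where "a = arsinh s"
  define A where "A = cosh a"
  define \<kappa> where "\<kappa> = sqrt ((2 + A^2) / 3)"
  note an = typeii_analysis[OF g C E C0 Q s_def a_def A_def \<kappa>_def]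
  have a0: "a > 0" and A1: "A > 1" using an(1,2) .
  obtain c where c: "\<forall>t\<in>I. \<bar>(x t - c) / \<kappa>\<bar> < bt A \<and> y t = Yt A ((x t - c) / \<kappa>) \<and>
           \<kappa> * (sinh (y t) * P (y t) * deriv y t / C) = - A * sin ((x t - c) / \<kappa>)" using an(3) by blast
  have tr: "geo_trace I x y = (\<lambda>th. (c + \<kappa> * th, Yt A th)) ` {- bt A<..<bt A}"
    by (rule typeii_construct[OF mg A1 \<kappa>_def C C0]) (use c in auto)
  have A2p: "2 + A^2 > 0" using zero_le_power2[of A] by linarith
  have kp: "\<kappa> > 0" unfolding \<kappa>_def using A2p by simp
  have kk: "sqrt ((3 + (sinh a)^2) / 3) = \<kappa>"
    unfolding \<kappa>_def A_def using cosh_square_eq[of a] by (simp add: algebra_simps)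
  have bt: "0 < bt A" "bt A < pi/2" using bt_facts[OF A1] by auto
  have Apos: "A > 0" using A1 by simp
  have seteq: "(\<lambda>th. (c + \<kappa> * th, Yt A th)) ` {- bt A<..<bt A} = hmove 1 c ` curve_ii a"
  proof
    show "(\<lambda>th. (c + \<kappa> * th, Yt A th)) ` {- bt A<..<bt A} \<subseteq> hmove 1 c ` curve_ii a"
    proof
      fix p assume "p \<in> (\<lambda>th. (c + \<kappa> * th, Yt A th)) ` {- bt A<..<bt A}"
      then obtain th where th0: "th \<in> {- bt A<..<bt A}" "p = (c + \<kappa> * th, Yt A th)" by blast
      have th: "\<bar>th\<bar> < bt A" "p = (c + \<kappa> * th, Yt A th)" using th0 by auto
      define v where "v = Yt A th"
      have v0: "v > 0" unfolding v_def using Yt_facts(2)[OF A1 th(1)] .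
      have cv: "cosh v = A * cos th" unfolding v_def using Yt_facts(1)[OF A1 th(1)] .
      have "cosh v \<le> cosh a" using cv A_def Apos by (simp add: mult_left_le)
      then have va: "v \<le> a" using cosh_real_nonneg_le_iff[of v a] v0 a0 by simp
      have ar: "arccos (cosh v / cosh a) = \<bar>th\<bar>"
        unfolding cv A_def[symmetric] using Apos th(1) bt by (simp add: arccos_cos_abs)
      have mem: "(\<kappa> * th, v) \<in> curve_ii a \<longleftrightarrow> 0 < v \<and> v \<le> a \<and>
          (\<kappa> * th = \<kappa> * arccos (cosh v / cosh a) \<or> \<kappa> * th = - \<kappa> * arccos (cosh v / cosh a))"
        unfolding curve_ii_def kk by simp
      have "(\<kappa> * th, v) \<in> curve_ii a"
        unfolding mem ar using v0 va kp by (cases "th \<ge> 0") auto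
      moreover have "p = hmove 1 c (\<kappa> * th, v)" unfolding hmove_def th(2) v_def by simp
      ultimately show "p \<in> hmove 1 c ` curve_ii a" by blast
    qed
    show "hmove 1 c ` curve_ii a \<subseteq> (\<lambda>th. (c + \<kappa> * th, Yt A th)) ` {- bt A<..<bt A}"
    proof
      fix p assume "p \<in> hmove 1 c ` curve_ii a"
      then obtain uu v where uv: "(uu, v) \<in> curve_ii a" "p = hmove 1 c (uu, v)" by auto
      have v: "0 < v" "v \<le> a" and uu: "uu = \<kappa> * arccos (cosh v / A) \<or> uu = - \<kappa> * arccos (cosh v / A)"
        using uv(1) unfolding curve_ii_def kk A_def by auto
      define z where "z = cosh v / A"
      have z: "1 / A < z" "z \<le> 1" "- 1 \<le> 1 / A" "- 1 \<le> z"
      proof -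
        have "cosh v > 1" using v(1) cosh_square_eq[of v] by (smt (verit) cosh_real_ge_1 cosh_real_nonneg_less_iff cosh_0)
        then show "1 / A < z" unfolding z_def using Apos by (simp add: divide_strict_right_mono)
        have "cosh v \<le> A" unfolding A_def using cosh_real_nonneg_le_iff[of v a] v a0 by simp
        then show "z \<le> 1" unfolding z_def using Apos by simp
        show "- 1 \<le> 1 / A" using Apos by (smt (verit) divide_pos_pos)
        then show "- 1 \<le> z" using \<open>1 / A < z\<close> by simp
      qed
      define th where "th = uu / \<kappa>"
      have th: "th = arccos z \<or> th = - arccos z" unfolding th_def z_def using uu kp by auto
      have "arccos z < bt A" unfolding bt_def using arccos_less_arccos[OF z(3) z(1) z(2)] .
      moreover have "0 \<le> arccos z" using arccos_lbound z by simp
      ultimately have thb: "\<bar>th\<bar> < bt A" using th by auto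
      have "cos th = z" using th z by auto
      then have "Yt A th = v" unfolding Yt_def z_def using Apos v(1) by (simp add: arcosh_cosh_real)
      moreover have "p = (c + \<kappa> * th, v)" unfolding uv(2) hmove_def th_def using kp by simp
      ultimately show "p \<in> (\<lambda>th. (c + \<kappa> * th, Yt A th)) ` {- bt A<..<bt A}" using thb by force
    qed
  qed
  have "(c + \<kappa> * 0, Yt A 0) \<in> geo_trace I x y" unfolding tr using bt by force
  then obtain t1 where t1: "t1 \<in> I" "x t1 = c" unfolding geo_trace_def by auto
  have "\<kappa> * (sinh (y t1) * P (y t1) * deriv y t1 / C) = - A * sin ((x t1 - c) / \<kappa>)" using c t1(1) by blast
  then have "\<kappa> * (sinh (y t1) * P (y t1) * deriv y t1 / C) = 0" using t1(2) by simp
  moreover have "sinh (y t1) > 0" "P (y t1) > 0" using u(1)[OF t1(1)] P_pos by auto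
  ultimately have "deriv y t1 = 0" using kp C0 by simp
  then show ?thesis using a0 tr seteq t1(1) by blast
qed


lemma F4_deriv:
  fixes a m v :: real
  assumes K0: "m^2 * (sinh a)^2 - 3 > 0"
  shows "(F4 a m has_real_derivative sqrt (3 + (sinh a)^2) * sinh v /
     sqrt ((m^2 * (sinh a)^2 - 3) * (cosh v)^2 + 3 * (cosh a)^2 + 2 * m^2 * (sinh a)^2)) (at v)"
proof -
  define K where "K = m^2 * (sinh a)^2 - 3"
  define B where "B = 3 * (cosh a)^2 + 2 * m^2 * (sinh a)^2"
  define c0 where "c0 = sqrt (3 + (sinh a)^2) / sqrt K"
  have Kp: "K > 0" unfolding K_def using K0 .
  have Bp: "B > 0" unfolding B_def by (simp add: add_pos_nonneg)
  have argp: "K * (cosh v)^2 + B > 0" using Kp Bp by (simp add: add_nonneg_pos)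
  define S where "S = sqrt (K * (cosh v)^2 + B)"
  have Sp: "S > 0" unfolding S_def using argp by simp
  have F: "F4 a m = (\<lambda>y. c0 * ln (K * cosh y + sqrt K * sqrt (K * (cosh y)^2 + B)))"
    unfolding F4_def[abs_def] K_def B_def c0_def by (simp add: add.assoc)
  have din: "((\<lambda>v. K * (cosh v)^2 + B) has_real_derivative K * (2 * cosh v * sinh v)) (at v)"
    by (auto intro!: derivative_eq_intros)
  have dS: "((\<lambda>v. sqrt (K * (cosh v)^2 + B)) has_real_derivative inverse S / 2 * (K * (2 * cosh v * sinh v))) (at v)"
    unfolding S_def using DERIV_chain2[OF DERIV_real_sqrt[OF argp] din] .
  define gv where "gv = K * cosh v + sqrt K * S"
  have gp: "gv > 0" unfolding gv_def using Kp Sp by (simp add: add_pos_pos)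
  have dg: "((\<lambda>v. K * cosh v + sqrt K * sqrt (K * (cosh v)^2 + B)) has_real_derivative
      K * sinh v + sqrt K * (inverse S / 2 * (K * (2 * cosh v * sinh v)))) (at v)"
    by (intro DERIV_add DERIV_cmult dS) (auto intro!: derivative_eq_intros)
  have "(F4 a m has_real_derivative c0 * (1 / gv * (K * sinh v + sqrt K * (inverse S / 2 * (K * (2 * cosh v * sinh v)))))) (at v)"
    unfolding F gv_def S_def using DERIV_cmult[OF DERIV_chain2[OF DERIV_ln_divide[OF gp[unfolded gv_def S_def]] dg[unfolded S_def]], of c0] .
  moreover have "c0 * (1 / gv * (K * sinh v + sqrt K * (inverse S / 2 * (K * (2 * cosh v * sinh v))))) = sqrt (3 + (sinh a)^2) * sinh v / S"
  proof -
    have sK: "sqrt K * sqrt K = K" using Kp by simp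
    have "K * sinh v + sqrt K * (inverse S / 2 * (K * (2 * cosh v * sinh v))) = sqrt K * sinh v * gv / S"
      unfolding gv_def using Sp Kp sK by (simp add: field_simps)
    then show ?thesis unfolding c0_def using gp Sp Kp by (simp add: field_simps)
  qed
  ultimately show ?thesis unfolding S_def K_def B_def by (simp add: add.assoc)
qed


lemma graph_set:
  "(\<lambda>v. (e * H v + c, v)) ` {0<..} = hmove e (c + e * H0) ` {(u, v). 0 < v \<and> u = H v - H0}"
proof
  show "(\<lambda>v. (e * H v + c, v)) ` {0<..} \<subseteq> hmove e (c + e * H0) ` {(u, v). 0 < v \<and> u = H v - H0}"
  proof
    fix p assume "p \<in> (\<lambda>v. (e * H v + c, v)) ` {0<..}"
    then obtain v where v: "v > 0" "p = (e * H v + c, v)" by auto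
    have "p = hmove e (c + e * H0) (H v - H0, v)" unfolding v(2) hmove_def by (simp add: algebra_simps)
    moreover have "(H v - H0, v) \<in> {(u, v). 0 < v \<and> u = H v - H0}" using v(1) by simp
    ultimately show "p \<in> hmove e (c + e * H0) ` {(u, v). 0 < v \<and> u = H v - H0}" by blast
  qed
  show "hmove e (c + e * H0) ` {(u, v). 0 < v \<and> u = H v - H0} \<subseteq> (\<lambda>v. (e * H v + c, v)) ` {0<..}"
  proof
    fix p assume "p \<in> hmove e (c + e * H0) ` {(u, v). 0 < v \<and> u = H v - H0}"
    then obtain uu v where uv: "0 < v" "uu = H v - H0" "p = hmove e (c + e * H0) (uu, v)" by auto
    have "p = (e * H v + c, v)" unfolding uv(3) uv(2) hmove_def by (simp add: algebra_simps)
    then show "p \<in> (\<lambda>v. (e * H v + c, v)) ` {0<..}" using uv(1) by auto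
  qed
qed

lemma pos_lemma: assumes "4 * C^2 \<le> E" "E > 0" "v > 0" shows "E * P v - C^2 > 0"
proof -
  have "E * P v > E * (1/4)" using P_gt[OF assms(3)] assms(2) by (simp add: mult_strict_left_mono)
  then show ?thesis using assms(1) by simp
qed

lemma case_iii_deriv:
  assumes E0: "E > 0" and Q: "4 * C^2 = E" and v: "v > 0"
  shows "((\<lambda>v. (2 * C / sqrt E) * (cosh v / sqrt 3)) has_real_derivative C / sqrt (E * P v - C^2)) (at v)"
proof -
  have sh: "sinh v > 0" using v by simp
  have "((\<lambda>v. (2 * C / sqrt E) * (cosh v / sqrt 3)) has_real_derivative (2 * C / sqrt E) * (sinh v / sqrt 3)) (at v)"
    using E0 by (auto intro!: derivative_eq_intros)
  moreover have "(2 * C / sqrt E) * (sinh v / sqrt 3) = C / sqrt (E * P v - C^2)"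
  proof -
    have "E * P v - C^2 = E * 3 / (4 * (sinh v)^2)"
      unfolding P_eq[OF v] P2_def Q[symmetric] using sh by (simp add: field_simps)
    then have eq: "sqrt (E * P v - C^2) = sqrt E * sqrt 3 / (2 * sinh v)"
      using sh by (simp add: real_sqrt_mult real_sqrt_divide)
    show ?thesis by (subst eq) (use sh E0 in \<open>simp add: field_simps\<close>)
  qed
  ultimately show ?thesis by simp
qed

lemma case_iv_deriv:
  assumes E0: "E > 0" and C0: "C \<noteq> 0" and Q: "4 * C^2 < E" and m: "m = sqrt (P 1 * E / C^2 - 1)"
  shows "m > sqrt 3 / sinh 1" "v > 0 \<Longrightarrow> ((\<lambda>v. sgn C * F4 1 m v) has_real_derivative C / sqrt (E * P v - C^2)) (at v)"
proof -
  define s where "s = sinh (1::real)"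
  have sp: "s > 0" unfolding s_def by simp
  have P1e: "P 1 = (s^2 + 3) / (4 * s^2)" unfolding s_def using P_sinh[of 1] by simp
  have C2: "C^2 > 0" using C0 by simp
  have EC: "E / C^2 > 4" using Q C2 by (simp add: field_simps)
  have "(1/4) * 4 < P 1 * (E / C^2)"
    by (rule mult_strict_mono) (use P_gt[of 1] EC in auto)
  then have "1 < P 1 * E / C^2" by simp
  then have X0: "P 1 * E / C^2 - 1 \<ge> 0" by linarith
  have m2: "m^2 = P 1 * E / C^2 - 1" unfolding m using X0 by (rule real_sqrt_pow2)
  have mpos: "m \<ge> 0" unfolding m using X0 by simp
  have Kpos: "m^2 * s^2 - 3 > 0"
  proof -
    have "m^2 = (s^2 + 3) * (E / C^2) / (4 * s^2) - 1" unfolding m2 P1e by (simp add: field_simps)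
    moreover have "(s^2 + 3) * (E / C^2) / (4 * s^2) > (s^2 + 3) * 4 / (4 * s^2)"
    proof -
      have s3: "s^2 + 3 > 0" by (simp add: add_nonneg_pos)
      have "(s^2 + 3) * 4 < (s^2 + 3) * (E / C^2)" using EC s3 by (rule mult_strict_left_mono)
      then show ?thesis by (rule divide_strict_right_mono) (use sp in simp)
    qed
    ultimately have "m^2 > (s^2 + 3) * 4 / (4 * s^2) - 1" by linarith
    moreover have "(s^2 + 3) * 4 / (4 * s^2) = (s^2 + 3) / s^2" using sp by (simp add: field_simps)
    ultimately have "m^2 > (s^2 + 3) / s^2 - 1" by simp
    then have "m^2 > 3 / s^2" using sp by (simp add: field_simps)
    then show ?thesis using sp by (simp add: field_simps)
  qed
  show "m > sqrt 3 / sinh 1"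
  proof -
    have "m^2 * s^2 > 3" using Kpos by simp
    then have "(m * s)^2 > (sqrt 3)^2" by (simp add: power_mult_distrib)
    then have "sqrt ((sqrt 3)^2) < sqrt ((m * s)^2)" by (rule real_sqrt_less_mono)
    then have "m * s > sqrt 3" using mpos sp by simp
    then show ?thesis unfolding s_def[symmetric] using sp by (simp add: field_simps)
  qed
  assume v: "v > 0"
  have sh: "sinh v > 0" using v by simp
  have K0: "m^2 * (sinh 1)^2 - 3 > 0" using Kpos unfolding s_def .
  have d: "((\<lambda>v. sgn C * F4 1 m v) has_real_derivative sgn C * (sqrt (3 + s^2) * sinh v /
     sqrt ((m^2 * s^2 - 3) * (cosh v)^2 + 3 * (cosh 1)^2 + 2 * m^2 * s^2))) (at v)"
    unfolding s_def by (intro DERIV_cmult F4_deriv[OF K0])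
  define Y where "Y = (m^2 * s^2 - 3) * (cosh v)^2 + 3 * (cosh 1)^2 + 2 * m^2 * s^2"
  define X where "X = E * P v - C^2"
  have Xp: "X > 0" unfolding X_def using pos_lemma[of C E v] Q E0 v by simp
  have Yp: "Y > 0" unfolding Y_def using Kpos by (simp add: add_pos_nonneg add_nonneg_pos)
  have keyeq: "C^2 * Y = (3 + s^2) * (sinh v)^2 * X"
  proof -
    have c1: "(cosh (1::real))^2 = s^2 + 1" unfolding s_def by (simp add: cosh_square_eq)
    have cv: "(cosh v)^2 = (sinh v)^2 + 1" by (simp add: cosh_square_eq)
    have Yeq: "Y = (m^2 * s^2 - 3) * (sinh v)^2 + 3 * s^2 * (1 + m^2)" unfolding Y_def c1 cv by (simp add: algebra_simps)
    have mm: "C^2 * (1 + m^2) = (s^2 + 3) * E / (4 * s^2)" unfolding m2 P1e using C2 sp by (simp add: field_simps)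
    have Pv: "(sinh v)^2 * P v = ((sinh v)^2 + 3) / 4" using KI1[OF v] by (simp add: field_simps)
    have "C^2 * Y = (C^2 * (1 + m^2)) * s^2 * (sinh v)^2 - 3 * C^2 * (sinh v)^2 - C^2 * (sinh v)^2 * s^2 + 3 * s^2 * (C^2 * (1 + m^2))"
      unfolding Yeq by (simp add: algebra_simps)
    also have "\<dots> = (s^2 + 3) * (E * ((sinh v)^2 + 3) / 4 - C^2 * (sinh v)^2)"
      unfolding mm using sp by (simp add: field_simps)
    also have "\<dots> = (s^2 + 3) * (E * ((sinh v)^2 * P v) - C^2 * (sinh v)^2)" unfolding Pv by simp
    also have "\<dots> = (3 + s^2) * (sinh v)^2 * X" unfolding X_def by (simp add: algebra_simps)
    finally show ?thesis .
  qed
  have "sgn C * (sqrt (3 + s^2) * sinh v / sqrt Y) = C / sqrt X"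
  proof -
    have "sqrt (3 + s^2) * sinh v / sqrt Y = sqrt ((3 + s^2) * (sinh v)^2 / Y)"
      using sh by (simp add: real_sqrt_mult real_sqrt_divide)
    also have "(3 + s^2) * (sinh v)^2 / Y = C^2 / X" using keyeq Xp Yp by (simp add: field_simps)
    also have "sqrt (C^2 / X) = \<bar>C\<bar> / sqrt X" by (simp add: real_sqrt_divide)
    finally show ?thesis by (simp add: sgn_if)
  qed
  then show "((\<lambda>v. sgn C * F4 1 m v) has_real_derivative C / sqrt (E * P v - C^2)) (at v)"
    using d unfolding X_def Y_def by simp
qed


lemma part1:
  shows "\<forall>I x y. maximal_geodesic I x y \<longrightarrow>
            (\<exists>e c a. e \<in> {1, -1} \<and> a > 0 \<and>
               (geo_trace I x y = hmove e c ` curve_i \<or>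
                geo_trace I x y = hmove e c ` curve_ii a \<or>
                geo_trace I x y = hmove e c ` curve_iii a \<or>
                (\<exists>m. m > sqrt 3 / sinh a \<and> geo_trace I x y = hmove e c ` curve_iv a m)))"
proof (intro allI impI)
  fix I x y assume mg: "maximal_geodesic I x y"
  have g: "geodesic_on I x y" using mg maximal_geodesic_def by blast
  obtain C E where C: "\<forall>t\<in>I. P (y t) * deriv x t = C" and E: "\<forall>t\<in>I. P (y t) * ((deriv x t)^2 + (deriv y t)^2) = E"
    using conservation[OF g] by blast
  obtain t0 where t0: "t0 \<in> I" using geo_interval(3)[OF g] by blast
  have E0: "E > 0" using cons_facts(1)[OF g C E t0] .
  show "\<exists>e c a. e \<in> {1, -1} \<and> a > 0 \<and>
               (geo_trace I x y = hmove e c ` curve_i \<or>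
                geo_trace I x y = hmove e c ` curve_ii a \<or>
                geo_trace I x y = hmove e c ` curve_iii a \<or>
                (\<exists>m. m > sqrt 3 / sinh a \<and> geo_trace I x y = hmove e c ` curve_iv a m))"
  proof (cases "4 * C^2 > E")
    case True
    have C0: "C \<noteq> 0" using True E0 by auto
    obtain c a where "a > 0" "geo_trace I x y = hmove 1 c ` curve_ii a"
      using typeii_full[OF mg C E C0 True] by blast
    then show ?thesis by blast
  next
    case False
    then have Q: "4 * C^2 \<le> E" by simp
    have pos: "\<And>v. v > 0 \<Longrightarrow> E * P v - C^2 > 0" using pos_lemma[OF Q E0] .
    consider "C = 0" | "C \<noteq> 0" "4 * C^2 = E" | "C \<noteq> 0" "4 * C^2 < E" using Q by linarith
    then show ?thesis
    proof cases
      case 1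
      have G: "\<And>v. v > 0 \<Longrightarrow> ((\<lambda>v. 0) has_real_derivative C / sqrt (E * P v - C^2)) (at v)"
        using 1 by simp
      obtain e c where ec: "e \<in> {1,-1}" "geo_trace I x y = (\<lambda>v. (e * 0 + c, v)) ` {0<..}"
        using mono_case[OF mg C E pos G] by blast
      have "geo_trace I x y = (\<lambda>v. (1 * (\<lambda>v. 0) v + c, v)) ` {0<..}" using ec(2) by simp
      also have "\<dots> = hmove 1 (c + 1 * 0) ` {(u, v). 0 < v \<and> u = (\<lambda>v. 0) v - 0}" by (rule graph_set)
      also have "{(u, v). 0 < v \<and> u = (\<lambda>v. 0::real) v - 0} = curve_i" unfolding curve_i_def by auto
      finally have "geo_trace I x y = hmove 1 c ` curve_i" by simp
      then show ?thesis by (intro exI[of _ 1] exI[of _ c] exI[of _ 1]) simp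
    next
      case 2
      define \<epsilon> where "\<epsilon> = 2 * C / sqrt E"
      have G: "\<And>v. v > 0 \<Longrightarrow> ((\<lambda>v. \<epsilon> * (cosh v / sqrt 3)) has_real_derivative C / sqrt (E * P v - C^2)) (at v)"
        unfolding \<epsilon>_def using case_iii_deriv[OF E0 2(2)] by blast
      obtain e c where ec: "e \<in> {1,-1}" "geo_trace I x y = (\<lambda>v. (e * (\<epsilon> * (cosh v / sqrt 3)) + c, v)) ` {0<..}"
        using mono_case[OF mg C E pos G] by blast
      have eps: "\<epsilon> \<in> {1, -1}"
      proof -
        have "sqrt E = sqrt ((2 * C)^2)" using 2(2) by (simp add: power_mult_distrib)
        also have "\<dots> = \<bar>2 * C\<bar>" by (rule real_sqrt_abs)
        finally have "sqrt E = \<bar>2 * C\<bar>" .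
        then show ?thesis unfolding \<epsilon>_def using 2(1) by (auto simp: abs_if)
      qed
      define e' where "e' = e * \<epsilon>"
      have e': "e' \<in> {1, -1}" unfolding e'_def using ec(1) eps by auto
      define H where "H v = cosh v / sqrt 3" for v :: real
      have "geo_trace I x y = (\<lambda>v. (e' * H v + c, v)) ` {0<..}" using ec(2) unfolding e'_def H_def by (simp add: mult.assoc)
      also have "\<dots> = hmove e' (c + e' * H 1) ` {(u, v). 0 < v \<and> u = H v - H 1}" by (rule graph_set)
      also have "{(u, v). 0 < v \<and> u = H v - H 1} = curve_iii 1" unfolding curve_iii_def H_def by (auto simp: diff_divide_distrib)
      finally show ?thesis using e' by (intro exI[of _ e'] exI[of _ "c + e' * H 1"] exI[of _ 1]) simp
    next
      case 3
      define m where "m = sqrt (P 1 * E / C^2 - 1)"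
      note iv = case_iv_deriv[OF E0 3(1) 3(2) m_def]
      obtain e c where ec: "e \<in> {1,-1}" "geo_trace I x y = (\<lambda>v. (e * (sgn C * F4 1 m v) + c, v)) ` {0<..}"
        using mono_case[OF mg C E pos iv(2)] by blast
      define e' where "e' = e * sgn C"
      have e': "e' \<in> {1, -1}" unfolding e'_def using ec(1) 3(1) by (auto simp: sgn_if)
      have "geo_trace I x y = (\<lambda>v. (e' * F4 1 m v + c, v)) ` {0<..}" using ec(2) unfolding e'_def by (simp add: mult.assoc)
      also have "\<dots> = hmove e' (c + e' * F4 1 m 1) ` {(u, v). 0 < v \<and> u = F4 1 m v - F4 1 m 1}" by (rule graph_set)
      also have "{(u, v). 0 < v \<and> u = F4 1 m v - F4 1 m 1} = curve_iv 1 m" unfolding curve_iv_def by simp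
      finally have "geo_trace I x y = hmove e' (c + e' * F4 1 m 1) ` curve_iv 1 m" .
      then show ?thesis using e' iv(1) by (intro exI[of _ e'] exI[of _ "c + e' * F4 1 m 1"] exI[of _ 1]) auto
    qed
  qed
qed

lemma part2:
  shows "\<forall>I x y t0 a m. maximal_geodesic I x y \<and> t0 \<in> I \<and> a > 0 \<and>
            x t0 = 0 \<and> y t0 = a \<and> deriv x t0 \<noteq> 0 \<and> deriv y t0 = m * deriv x t0 \<and>
            0 \<le> m \<and> m < sqrt 3 / sinh a \<longrightarrow>
            (\<exists>t1\<in>I. deriv y t1 = 0) \<and>
            (\<exists>c b. b > 0 \<and> geo_trace I x y = hmove 1 c ` curve_ii b)"
proof (intro allI impI)
  fix I x y t0 a m
  assume h: "maximal_geodesic I x y \<and> t0 \<in> I \<and> a > 0 \<and>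
            x t0 = 0 \<and> y t0 = a \<and> deriv x t0 \<noteq> 0 \<and> deriv y t0 = m * deriv x t0 \<and>
            0 \<le> m \<and> m < sqrt 3 / sinh a"
  then have mg: "maximal_geodesic I x y" and t0: "t0 \<in> I" and a0: "a > 0" and yt0: "y t0 = a"
    and x0: "deriv x t0 \<noteq> 0" and ym: "deriv y t0 = m * deriv x t0" and m0: "0 \<le> m" and mlt: "m < sqrt 3 / sinh a"
    by auto
  have g: "geodesic_on I x y" using mg maximal_geodesic_def by blast
  obtain C E where C: "\<forall>t\<in>I. P (y t) * deriv x t = C" and E: "\<forall>t\<in>I. P (y t) * ((deriv x t)^2 + (deriv y t)^2) = E"
    using conservation[OF g] by blast
  have pa: "P a > 0" using P_pos[OF a0] .
  have Cv: "C = P a * deriv x t0" using C t0 yt0 by force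
  have Ev: "E = P a * ((deriv x t0)^2 * (1 + m^2))" using E t0 yt0 ym by (force simp: algebra_simps power_mult_distrib)
  have C0: "C \<noteq> 0" unfolding Cv using pa x0 by simp
  have sh: "sinh a > 0" using a0 by simp
  have m2: "m^2 < 3 / (sinh a)^2"
  proof -
    have "m^2 < (sqrt 3 / sinh a)^2" using m0 mlt by (simp add: power_strict_mono)
    then show ?thesis by (simp add: power_divide)
  qed
  have "4 * P a = 1 + 3 / (sinh a)^2" unfolding P_eq[OF a0] P2_def using sh by (simp add: field_simps)
  then have "4 * P a > 1 + m^2" using m2 by simp
  moreover have x2: "(deriv x t0)^2 > 0" using x0 by simp
  ultimately have "P a * (deriv x t0)^2 * (4 * P a) > P a * (deriv x t0)^2 * (1 + m^2)"
    using pa by (simp add: mult_strict_left_mono)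
  then have Q: "4 * C^2 > E" unfolding Cv Ev by (simp add: algebra_simps power_mult_distrib power2_eq_square)
  obtain c b where "b > 0" "geo_trace I x y = hmove 1 c ` curve_ii b" "\<exists>t1\<in>I. deriv y t1 = 0"
    using typeii_full[OF mg C E C0 Q] by blast
  then show "(\<exists>t1\<in>I. deriv y t1 = 0) \<and> (\<exists>c b. b > 0 \<and> geo_trace I x y = hmove 1 c ` curve_ii b)" by blast
qed

theorem proposition3p2:
  shows "(\<forall>I x y. maximal_geodesic I x y \<longrightarrow>
            (\<exists>e c a. e \<in> {1, -1} \<and> a > 0 \<and>
               (geo_trace I x y = hmove e c ` curve_i \<or>
                geo_trace I x y = hmove e c ` curve_ii a \<or>
                geo_trace I x y = hmove e c ` curve_iii a \<or>
                (\<exists>m. m > sqrt 3 / sinh a \<and> geo_trace I x y = hmove e c ` curve_iv a m))))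
       \<and> (\<forall>I x y t0 a m. maximal_geodesic I x y \<and> t0 \<in> I \<and> a > 0 \<and>
            x t0 = 0 \<and> y t0 = a \<and> deriv x t0 \<noteq> 0 \<and> deriv y t0 = m * deriv x t0 \<and>
            0 \<le> m \<and> m < sqrt 3 / sinh a \<longrightarrow>
            (\<exists>t1\<in>I. deriv y t1 = 0) \<and>
            (\<exists>c b. b > 0 \<and> geo_trace I x y = hmove 1 c ` curve_ii b))"
  by (rule conjI[OF part1 part2])


end
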